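(* Let $\mathcal O$ be an order in a definite quaternion algebra $H$ over $\mathbb Q$, $\mathfrak a$ a left $\mathcal O$-ideal and $m\ge1$. Then $T_m(\mathfrak a)=\{\mathfrak b\text{ left }\mathcal O\text{-ideal}:\mathfrak b\subseteq\mathfrak a,\ [\mathfrak a:\mathfrak b]=m^2\}$. Moreover $m\mathfrak a\subseteq\mathfrak b$ for every $\mathfrak b\in T_m(\mathfrak a)$; in particular, $\mathfrak b\in T_m(\mathfrak a)$ if and only if $m\mathfrak a\in T_m(\mathfrak b)$.
   Context: $N$ reduced norm; for a lattice $\mathfrak a$, $N(\mathfrak a)=\gcd\{N(x):x\in\mathfrak a\}$. A left $\mathcal O$-ideal is a lattice $\mathfrak a$ with $\mathfrak a\otimes\mathbb Z_q=\mathcal O_qx_q$, $x_q\in H_q^\times$, for every prime $q$. $T_m(\mathfrak a)=\{\mathfrak b\text{ left }\mathcal O\text{-ideal}:\mathfrak b\subseteq\mathfrak a,\ N(\mathfrak b)=mN(\mathfrak a)\}$. *)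

theory Defs
  imports Complex_Main "HOL-Computational_Algebra.Primes"
begin

text \<open>Elements x0 + x1 i + x2 j + x3 k of the quaternion algebra (a,b)_Q with
  i^2 = a, j^2 = b, k = ij = -ji.  Every definite quaternion algebra over Q is
  isomorphic to (a,b)_Q for some rationals a < 0, b < 0.\<close>

datatype quat = Quat (q0: rat) (q1: rat) (q2: rat) (q3: rat)

instantiation quat :: ab_group_add
begin
definition "0 = Quat 0 0 0 0"
definition "x + y = Quat (q0 x + q0 y) (q1 x + q1 y) (q2 x + q2 y) (q3 x + q3 y)"
definition "x - y = Quat (q0 x - q0 y) (q1 x - q1 y) (q2 x - q2 y) (q3 x - q3 y)"
definition "- x = Quat (- q0 x) (- q1 x) (- q2 x) (- q3 x)"
instance
  by standard (auto simp: zero_quat_def plus_quat_def minus_quat_def uminus_quat_def)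
end

definition qscale :: "rat \<Rightarrow> quat \<Rightarrow> quat" where
  "qscale r x = Quat (r * q0 x) (r * q1 x) (r * q2 x) (r * q3 x)"

definition qone :: quat where "qone = Quat 1 0 0 0"

definition qmul :: "rat \<Rightarrow> rat \<Rightarrow> quat \<Rightarrow> quat \<Rightarrow> quat" where
  "qmul a b x y = Quat
     (q0 x * q0 y + a * q1 x * q1 y + b * q2 x * q2 y - a * b * q3 x * q3 y)
     (q0 x * q1 y + q1 x * q0 y - b * q2 x * q3 y + b * q3 x * q2 y)
     (q0 x * q2 y + q2 x * q0 y + a * q1 x * q3 y - a * q3 x * q1 y)
     (q0 x * q3 y + q3 x * q0 y + q1 x * q2 y - q2 x * q1 y)"

definition qnrd :: "rat \<Rightarrow> rat \<Rightarrow> quat \<Rightarrow> rat" where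
  "qnrd a b x = q0 x ^ 2 - a * q1 x ^ 2 - b * q2 x ^ 2 + a * b * q3 x ^ 2"

definition definite_quat_alg :: "rat \<Rightarrow> rat \<Rightarrow> bool" where
  "definite_quat_alg a b \<longleftrightarrow> a < 0 \<and> b < 0"

definition qunit :: "rat \<Rightarrow> rat \<Rightarrow> quat \<Rightarrow> bool" where
  "qunit a b x \<longleftrightarrow> (\<exists>y. qmul a b x y = qone \<and> qmul a b y x = qone)"

definition is_lattice :: "quat set \<Rightarrow> bool" where
  "is_lattice L \<longleftrightarrow> (\<exists>v :: nat \<Rightarrow> quat.
      (\<forall>c :: nat \<Rightarrow> rat. (\<Sum>i<4. qscale (c i) (v i)) = 0 \<longrightarrow> (\<forall>i<4. c i = 0)) \<and>
      L = {(\<Sum>i<4. qscale (of_int (n i)) (v i)) | n :: nat \<Rightarrow> int. True})"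

definition is_order :: "rat \<Rightarrow> rat \<Rightarrow> quat set \<Rightarrow> bool" where
  "is_order a b O' \<longleftrightarrow> is_lattice O' \<and> qone \<in> O' \<and>
      (\<forall>x\<in>O'. \<forall>y\<in>O'. qmul a b x y \<in> O')"

definition zloc :: "nat \<Rightarrow> rat set" where
  "zloc q = {r. \<not> (int q dvd snd (quotient_of r))}"

text \<open>The Z_(q)-span of a subset of H, i.e. L \<otimes> Z_(q) for a lattice L.\<close>
definition loc_span :: "nat \<Rightarrow> quat set \<Rightarrow> quat set" where
  "loc_span q S = {(\<Sum>v\<in>F. qscale (c v) v) | F c. finite F \<and> F \<subseteq> S \<and> (\<forall>v\<in>F. c v \<in> zloc q)}"

definition left_ideal :: "rat \<Rightarrow> rat \<Rightarrow> quat set \<Rightarrow> quat set \<Rightarrow> bool" where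
  "left_ideal a b O' A \<longleftrightarrow> is_lattice A \<and>
     (\<forall>q. prime q \<longrightarrow> (\<exists>x. qunit a b x \<and>
        loc_span q A = {qmul a b y x | y. y \<in> loc_span q O'}))"

definition int_span :: "rat set \<Rightarrow> rat set" where
  "int_span S = {(\<Sum>r\<in>F. of_int (c r) * r) | F c. finite F \<and> F \<subseteq> S}"

text \<open>Norm of a lattice: the gcd of the reduced norms of its elements, i.e. the
  positive generator of the fractional ideal of Z generated by them.\<close>
definition lat_norm :: "rat \<Rightarrow> rat \<Rightarrow> quat set \<Rightarrow> rat" where
  "lat_norm a b L = (THE r. r > 0 \<and> int_span (qnrd a b ` L) = {of_int n * r | n. True})"

definition lat_index :: "quat set \<Rightarrow> quat set \<Rightarrow> nat" where
  "lat_index A B = card ((\<lambda>x. {x + y | y. y \<in> B}) ` A)"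

definition Tm :: "rat \<Rightarrow> rat \<Rightarrow> quat set \<Rightarrow> nat \<Rightarrow> quat set \<Rightarrow> quat set set" where
  "Tm a b O' m A = {B. left_ideal a b O' B \<and> B \<subseteq> A \<and> lat_norm a b B = of_nat m * lat_norm a b A}"

definition lat_smult :: "nat \<Rightarrow> quat set \<Rightarrow> quat set" where
  "lat_smult m A = qscale (of_nat m) ` A"

end

theory Submission
  imports Defs "HOL-Computational_Algebra.Squarefree" "HOL-Library.FuncSet"
begin

lemma quat_eqI: "q0 x = q0 y \<Longrightarrow> q1 x = q1 y \<Longrightarrow> q2 x = q2 y \<Longrightarrow> q3 x = q3 y \<Longrightarrow> x = y"
  by (cases x; cases y) auto

lemma quat_comps [simp]:
  "q0 0 = 0" "q1 0 = 0" "q2 0 = 0" "q3 0 = 0"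
  "q0 (x + y) = q0 x + q0 y" "q1 (x + y) = q1 x + q1 y" "q2 (x + y) = q2 x + q2 y" "q3 (x + y) = q3 x + q3 y"
  "q0 (x - y) = q0 x - q0 y" "q1 (x - y) = q1 x - q1 y" "q2 (x - y) = q2 x - q2 y" "q3 (x - y) = q3 x - q3 y"
  "q0 (- x) = - q0 x" "q1 (- x) = - q1 x" "q2 (- x) = - q2 x" "q3 (- x) = - q3 x"
  "q0 (qscale r x) = r * q0 x" "q1 (qscale r x) = r * q1 x" "q2 (qscale r x) = r * q2 x" "q3 (qscale r x) = r * q3 x"
  "q0 qone = 1" "q1 qone = 0" "q2 qone = 0" "q3 qone = 0"
  by (simp_all add: zero_quat_def plus_quat_def minus_quat_def uminus_quat_def qscale_def qone_def)

lemma quat_sum_comps [simp]: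
  "q0 (sum f A) = (\<Sum>x\<in>A. q0 (f x))" "q1 (sum f A) = (\<Sum>x\<in>A. q1 (f x))"
  "q2 (sum f A) = (\<Sum>x\<in>A. q2 (f x))" "q3 (sum f A) = (\<Sum>x\<in>A. q3 (f x))"
  by (induct A rule: infinite_finite_induct; simp)+

lemma qmul_comps [simp]:
  "q0 (qmul a b x y) = q0 x * q0 y + a * q1 x * q1 y + b * q2 x * q2 y - a * b * q3 x * q3 y"
  "q1 (qmul a b x y) = q0 x * q1 y + q1 x * q0 y - b * q2 x * q3 y + b * q3 x * q2 y"
  "q2 (qmul a b x y) = q0 x * q2 y + q2 x * q0 y + a * q1 x * q3 y - a * q3 x * q1 y"
  "q3 (qmul a b x y) = q0 x * q3 y + q3 x * q0 y + q1 x * q2 y - q2 x * q1 y"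
  by (simp_all add: qmul_def)

lemma qscale_simps [simp]:
  "qscale 1 x = x" "qscale 0 x = 0" "qscale r 0 = 0"
  "qscale r (qscale s x) = qscale (r * s) x"
  by (auto intro!: quat_eqI)

lemma qscale_add_right: "qscale r (x + y) = qscale r x + qscale r y"
  and qscale_add_left: "qscale (r + s) x = qscale r x + qscale s x"
  and qscale_diff_right: "qscale r (x - y) = qscale r x - qscale r y"
  and qscale_diff_left: "qscale (r - s) x = qscale r x - qscale s x"
  and qscale_minus_right: "qscale r (- x) = - qscale r x"
  and qscale_minus_left: "qscale (- r) x = - qscale r x"
  by (auto intro!: quat_eqI simp: algebra_simps)

lemma qscale_sum_right: "qscale r (sum f A) = (\<Sum>x\<in>A. qscale r (f x))"
  by (induct A rule: infinite_finite_induct; simp add: qscale_add_right)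

lemma qscale_sum_left: "qscale (sum f A) x = (\<Sum>i\<in>A. qscale (f i) x)"
  by (induct A rule: infinite_finite_induct; simp add: qscale_add_left)

lemma qmul_add_left: "qmul a b (x + y) z = qmul a b x z + qmul a b y z"
  and qmul_add_right: "qmul a b z (x + y) = qmul a b z x + qmul a b z y"
  and qmul_diff_left: "qmul a b (x - y) z = qmul a b x z - qmul a b y z"
  and qmul_diff_right: "qmul a b z (x - y) = qmul a b z x - qmul a b z y"
  and qmul_minus_left: "qmul a b (- x) z = - qmul a b x z"
  and qmul_minus_right: "qmul a b z (- x) = - qmul a b z x"
  and qmul_scale_left: "qmul a b (qscale r x) z = qscale r (qmul a b x z)"
  and qmul_scale_right: "qmul a b z (qscale r x) = qscale r (qmul a b z x)"
  and qmul_zero_left [simp]: "qmul a b 0 z = 0"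
  and qmul_zero_right [simp]: "qmul a b z 0 = 0"
  and qmul_one_left [simp]: "qmul a b qone z = z"
  and qmul_one_right [simp]: "qmul a b z qone = z"
  by (auto intro!: quat_eqI simp: algebra_simps)

lemma qmul_sum_left: "qmul a b (sum f A) z = (\<Sum>i\<in>A. qmul a b (f i) z)"
  by (induct A rule: infinite_finite_induct; simp add: qmul_add_left)

lemma qmul_sum_right: "qmul a b z (sum f A) = (\<Sum>i\<in>A. qmul a b z (f i))"
  by (induct A rule: infinite_finite_induct; simp add: qmul_add_right)

lemma qmul_assoc: "qmul a b (qmul a b x y) z = qmul a b x (qmul a b y z)"
  by (rule quat_eqI) (simp_all add: algebra_simps)

definition qconj :: "quat \<Rightarrow> quat" where
  "qconj x = Quat (q0 x) (- q1 x) (- q2 x) (- q3 x)"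

lemma qconj_comps [simp]:
  "q0 (qconj x) = q0 x" "q1 (qconj x) = - q1 x" "q2 (qconj x) = - q2 x" "q3 (qconj x) = - q3 x"
  by (simp_all add: qconj_def)

lemma qconj_eq: "qconj x = qscale (2 * q0 x) qone - x"
  by (rule quat_eqI) simp_all

lemma qmul_conj_right: "qmul a b x (qconj x) = qscale (qnrd a b x) qone"
  by (rule quat_eqI) (simp_all add: qnrd_def algebra_simps power2_eq_square)

lemma qmul_conj_left: "qmul a b (qconj x) x = qscale (qnrd a b x) qone"
  by (rule quat_eqI) (simp_all add: qnrd_def algebra_simps power2_eq_square)

lemma qnrd_mult: "qnrd a b (qmul a b x y) = qnrd a b x * qnrd a b y"
  by (simp add: qnrd_def power2_eq_square algebra_simps)

lemma qnrd_scale: "qnrd a b (qscale r x) = r^2 * qnrd a b x"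
  by (simp add: qnrd_def power2_eq_square algebra_simps)

lemma qnrd_one [simp]: "qnrd a b qone = 1"
  by (simp add: qnrd_def)

lemma qsquare: "qmul a b x x = qscale (2 * q0 x) x - qscale (qnrd a b x) qone"
  by (rule quat_eqI) (simp_all add: qnrd_def algebra_simps power2_eq_square)

lemma qnrd_pos:
  assumes "a < 0" "b < 0" "x \<noteq> 0"
  shows "qnrd a b x > 0"
proof -
  have ab: "a * b > 0" using assms by (simp add: mult_neg_neg)
  have t1: "- a * q1 x ^ 2 \<ge> 0" "- b * q2 x ^ 2 \<ge> 0" "a * b * q3 x ^ 2 \<ge> 0"
    using assms ab by (auto intro!: mult_nonneg_nonneg mult_nonpos_nonneg)
  have "q0 x \<noteq> 0 \<or> q1 x \<noteq> 0 \<or> q2 x \<noteq> 0 \<or> q3 x \<noteq> 0"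
    using assms(3) by (auto intro: quat_eqI)
  then have "q0 x ^ 2 > 0 \<or> - a * q1 x ^ 2 > 0 \<or> - b * q2 x ^ 2 > 0 \<or> a * b * q3 x ^ 2 > 0"
    using assms ab by (auto intro!: mult_pos_pos mult_neg_pos)
  moreover have "q0 x ^ 2 \<ge> 0" by simp
  ultimately show ?thesis using t1 unfolding qnrd_def by (elim disjE) linarith+
qed

definition qinv :: "rat \<Rightarrow> rat \<Rightarrow> quat \<Rightarrow> quat" where
  "qinv a b x = qscale (1 / qnrd a b x) (qconj x)"

lemma qinv_right: "qnrd a b x \<noteq> 0 \<Longrightarrow> qmul a b x (qinv a b x) = qone"
  by (simp add: qinv_def qmul_scale_right qmul_conj_right)

lemma qinv_left: "qnrd a b x \<noteq> 0 \<Longrightarrow> qmul a b (qinv a b x) x = qone"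
  by (simp add: qinv_def qmul_scale_left qmul_conj_left)

lemma qnrd_zero_iff: "a < 0 \<Longrightarrow> b < 0 \<Longrightarrow> qnrd a b x = 0 \<longleftrightarrow> x = 0"
  using qnrd_pos[of a b x] by (cases "x = 0") (auto simp: qnrd_def)

definition vq :: "nat \<Rightarrow> rat \<Rightarrow> int" where
  "vq q r = int (multiplicity (int q) (fst (quotient_of r))) - int (multiplicity (int q) (snd (quotient_of r)))"

lemma vq_zero [simp]: "vq q 0 = 0"
  by (simp add: vq_def)

lemma prime_int_q: "prime (q::nat) \<Longrightarrow> prime_elem (int q)"
  by simp

lemma vq_frac:
  assumes q: "prime q" and u: "u \<noteq> 0" and w: "w \<noteq> 0"
  shows "vq q (of_int u / of_int w) = int (multiplicity (int q) u) - int (multiplicity (int q) w)"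
proof -
  obtain u' w' where qo: "quotient_of (of_int u / of_int w) = (u', w')" by (cases "quotient_of (of_int u / of_int w)")
  have w'p: "w' > 0" using quotient_of_denom_pos[OF qo] .
  have eq: "(of_int u / of_int w :: rat) = of_int u' / of_int w'" using quotient_of_div[OF qo] .
  have u': "u' \<noteq> 0" using eq u w w'p by auto
  have "of_int (u' * w) = (of_int (u * w') :: rat)"
    using eq w w'p by (simp add: field_simps)
  then have cr: "u' * w = u * w'" by (simp only: of_int_eq_iff)
  have "multiplicity (int q) (u' * w) = multiplicity (int q) (u * w')" using cr by simp
  then have "multiplicity (int q) u' + multiplicity (int q) w = multiplicity (int q) u + multiplicity (int q) w'"
    using q u w u' w'p by (simp add: prime_elem_multiplicity_mult_distrib)
  then show ?thesis unfolding vq_def qo by simp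
qed

lemma vq_int: "prime q \<Longrightarrow> u \<noteq> 0 \<Longrightarrow> vq q (of_int u) = int (multiplicity (int q) u)"
  using vq_frac[of q u 1] by simp


lemma rat_as_frac: fixes r :: rat obtains u w where "r = of_int u / of_int w" "w > 0" "r \<noteq> 0 \<Longrightarrow> u \<noteq> 0"
proof -
  obtain u w where qo: "quotient_of r = (u, w)" by (cases "quotient_of r")
  show ?thesis using that[of u w] quotient_of_div[OF qo] quotient_of_denom_pos[OF qo] by auto
qed

lemma vq_mult:
  assumes q: "prime q" and r: "r \<noteq> 0" and s: "s \<noteq> 0"
  shows "vq q (r * s) = vq q r + vq q s"
proof -
  obtain u w where r': "r = of_int u / of_int w" "w > 0" "u \<noteq> 0" using rat_as_frac[of r] r by metis
  obtain u2 w2 where s': "s = of_int u2 / of_int w2" "w2 > 0" "u2 \<noteq> 0" using rat_as_frac[of s] s by metis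
  have "r * s = of_int (u * u2) / of_int (w * w2)" using r' s' by simp
  then show ?thesis using r' s' q
    by (simp add: vq_frac prime_elem_multiplicity_mult_distrib del: of_int_mult)
qed

lemma vq_inverse: "prime q \<Longrightarrow> r \<noteq> 0 \<Longrightarrow> vq q (inverse r) = - vq q r"
  using vq_mult[of q r "inverse r"] by (simp add: vq_def)

lemma vq_divide: "prime q \<Longrightarrow> r \<noteq> 0 \<Longrightarrow> s \<noteq> 0 \<Longrightarrow> vq q (r / s) = vq q r - vq q s"
  by (simp add: divide_inverse vq_mult vq_inverse)

lemma vq_power: "prime q \<Longrightarrow> vq q (r ^ k) = int k * vq q r"
proof (induct k)
  case (Suc k) then show ?case
    by (cases "r = 0") (simp_all add: vq_mult algebra_simps)
qed (simp add: vq_def)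

lemma vq_minus [simp]: "vq q (- r) = vq q r"
  by (simp add: vq_def rat_uminus_code split: prod.splits prod.split_sel)

lemma vq_one [simp]: "vq q 1 = 0"
  by (simp add: vq_def)

lemma vq_self: "prime q \<Longrightarrow> vq q (of_nat q) = 1"
  using vq_int[of q "int q"] multiplicity_self[of "int q"] prime_gt_1_nat[of q] by simp

lemma zloc_iff_frac:
  assumes q: "prime q"
  shows "r \<in> zloc q \<longleftrightarrow> (\<exists>u w. \<not> int q dvd w \<and> r = of_int u / of_int w)"
proof
  assume "r \<in> zloc q"
  then show "\<exists>u w. \<not> int q dvd w \<and> r = of_int u / of_int w"
    unfolding zloc_def using quotient_of_div[of r "fst (quotient_of r)" "snd (quotient_of r)"] by auto
next
  assume "\<exists>u w. \<not> int q dvd w \<and> r = of_int u / of_int w"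
  then obtain u w where uw: "\<not> int q dvd w" "r = of_int u / of_int w" by blast
  have w0: "w \<noteq> 0" using uw(1) by auto
  obtain u' w' where qo: "quotient_of r = (u', w')" by (cases "quotient_of r")
  have w'p: "w' > 0" using quotient_of_denom_pos[OF qo] .
  have cop: "coprime u' w'" using quotient_of_coprime[OF qo] .
  have eq: "r = of_int u' / of_int w'" using quotient_of_div[OF qo] .
  have "of_int (u' * w) = (of_int (u * w') :: rat)"
    using eq uw w0 w'p by (simp add: field_simps)
  then have cr: "u' * w = u * w'" by (simp only: of_int_eq_iff)
  show "r \<in> zloc q"
  proof (rule ccontr)
    assume "r \<notin> zloc q"
    then have "int q dvd w'" by (simp add: zloc_def qo)
    then have "int q dvd u' * w" using cr by simp
    then have "int q dvd u'" using uw(1) q by (simp add: prime_dvd_mult_iff)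
    then show False using cop \<open>int q dvd w'\<close> q
      by (metis coprime_common_divisor not_prime_unit prime_nat_int_transfer)
  qed
qed

lemma zloc_int [simp]: "prime q \<Longrightarrow> of_int n \<in> zloc q"
  using prime_gt_1_nat[of q] by (simp add: zloc_def)

lemma zloc_nat [simp]: "prime q \<Longrightarrow> of_nat n \<in> zloc q"
  using zloc_int[of q "int n"] by simp

lemma zloc_0 [simp]: "prime q \<Longrightarrow> 0 \<in> zloc q" and zloc_1 [simp]: "prime q \<Longrightarrow> 1 \<in> zloc q"
  using zloc_int[of q 0] zloc_int[of q 1] by simp_all

lemma zloc_numeral [simp]: "prime q \<Longrightarrow> numeral n \<in> zloc q"
  using zloc_nat[of q "numeral n"] by simp

lemma zloc_add: assumes q: "prime q" and "r \<in> zloc q" "s \<in> zloc q" shows "r + s \<in> zloc q"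
proof -
  obtain u w u2 w2 where "\<not> int q dvd w" "r = of_int u / of_int w" "\<not> int q dvd w2" "s = of_int u2 / of_int w2"
    using assms zloc_iff_frac by metis
  moreover then have "w \<noteq> 0" "w2 \<noteq> 0" by auto
  ultimately have "r + s = of_int (u * w2 + u2 * w) / of_int (w * w2)" "\<not> int q dvd w * w2"
    using q by (simp_all add: field_simps prime_dvd_mult_iff)
  then show ?thesis using zloc_iff_frac[OF q] by blast
qed

lemma zloc_mult: assumes q: "prime q" and "r \<in> zloc q" "s \<in> zloc q" shows "r * s \<in> zloc q"
proof -
  obtain u w u2 w2 where "\<not> int q dvd w" "r = of_int u / of_int w" "\<not> int q dvd w2" "s = of_int u2 / of_int w2"
    using assms zloc_iff_frac by metis
  moreover then have "w \<noteq> 0" "w2 \<noteq> 0" by auto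
  ultimately have "r * s = of_int (u * u2) / of_int (w * w2)" "\<not> int q dvd w * w2"
    using q by (simp_all add: prime_dvd_mult_iff)
  then show ?thesis using zloc_iff_frac[OF q] by blast
qed

lemma zloc_minus: assumes q: "prime q" and "r \<in> zloc q" shows "- r \<in> zloc q"
  using zloc_mult[OF q zloc_int[OF q, of "-1"] assms(2)] by simp

lemma zloc_diff: "prime q \<Longrightarrow> r \<in> zloc q \<Longrightarrow> s \<in> zloc q \<Longrightarrow> r - s \<in> zloc q"
  using zloc_add[of q r "- s"] zloc_minus[of q s] by simp

lemma zloc_power: "prime q \<Longrightarrow> r \<in> zloc q \<Longrightarrow> r ^ k \<in> zloc q"
  by (induct k) (simp_all add: zloc_mult)

lemma zloc_sum: "prime q \<Longrightarrow> (\<And>i. i \<in> A \<Longrightarrow> f i \<in> zloc q) \<Longrightarrow> sum f A \<in> zloc q"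
  by (induct A rule: infinite_finite_induct) (simp_all add: zloc_add)

lemma zloc_iff_vq:
  assumes q: "prime q"
  shows "r \<in> zloc q \<longleftrightarrow> r = 0 \<or> vq q r \<ge> 0"
proof (cases "r = 0")
  case False
  obtain u w where qo: "quotient_of r = (u, w)" by (cases "quotient_of r")
  have w'p: "w > 0" using quotient_of_denom_pos[OF qo] .
  have cop: "coprime u w" using quotient_of_coprime[OF qo] .
  have eq: "r = of_int u / of_int w" using quotient_of_div[OF qo] .
  have u0: "u \<noteq> 0" using eq False by auto
  have v: "vq q r = int (multiplicity (int q) u) - int (multiplicity (int q) w)"
    unfolding vq_def qo by simp
  show ?thesis
  proof (cases "int q dvd w")
    case True
    then have "\<not> int q dvd u" using cop q
      by (metis coprime_common_divisor not_prime_unit prime_nat_int_transfer)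
    then have "multiplicity (int q) u = 0" by (simp add: not_dvd_imp_multiplicity_0)
    moreover have "multiplicity (int q) w > 0" using True w'p q
      by (subst multiplicity_gt_zero_iff) (auto simp: prime_gt_1_nat)
    ultimately show ?thesis using False True v by (simp add: zloc_def qo)
  next
    case False
    then have "multiplicity (int q) w = 0" by (simp add: not_dvd_imp_multiplicity_0)
    then show ?thesis using False v by (simp add: zloc_def qo)
  qed
qed (simp add: q)

lemma vq_add_ge:
  assumes q: "prime q" and "r \<noteq> 0" "s \<noteq> 0" "r + s \<noteq> 0"
  shows "vq q (r + s) \<ge> min (vq q r) (vq q s)"
proof -
  define m where "m = min (vq q r) (vq q s)"
  define c where "c = (of_nat q :: rat) powi m"
  have qp: "q > 0" using q prime_gt_0_nat by blast
  have c0: "c \<noteq> 0" unfolding c_def using qp by simp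
  have vc: "vq q c = m"
  proof (cases "m \<ge> 0")
    case True then show ?thesis unfolding c_def
      using vq_power[OF q, of "of_nat q" "nat m"] vq_self[OF q] by (simp add: power_int_def)
  next
    case False then show ?thesis unfolding c_def
      using vq_power[OF q, of "inverse (of_nat q)" "nat (- m)"] vq_self[OF q] vq_inverse[OF q, of "of_nat q"] qp
      by (simp add: power_int_def power_inverse)
  qed
  have "r / c \<in> zloc q" "s / c \<in> zloc q"
    using assms c0 vc unfolding zloc_iff_vq[OF q] m_def by (simp_all add: vq_divide)
  then have "(r + s) / c \<in> zloc q" using zloc_add[OF q] by (simp add: add_divide_distrib)
  then have "vq q ((r + s) / c) \<ge> 0" using assms c0 unfolding zloc_iff_vq[OF q] by simp
  then show ?thesis using assms c0 vc by (simp add: vq_divide m_def)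
qed

lemma vq_add_strict:
  assumes q: "prime q" and r: "r \<noteq> 0" and lt: "s = 0 \<or> vq q r < vq q s"
  shows "vq q (r + s) = vq q r" "r + s \<noteq> 0"
proof -
  show rs: "r + s \<noteq> 0"
  proof
    assume "r + s = 0" then have "s = - r" by simp
    then show False using lt r by auto
  qed
  show "vq q (r + s) = vq q r"
  proof (cases "s = 0")
    case False
    have "vq q (r + s) \<ge> min (vq q r) (vq q s)" using vq_add_ge[OF q r False rs] .
    moreover have "vq q ((r + s) + (- s)) \<ge> min (vq q (r + s)) (vq q (- s))"
      using vq_add_ge[OF q rs, of "- s"] False r by simp
    ultimately show ?thesis using lt False by simp
  qed simp
qed

lemma zloc_all_int:
  assumes "\<And>q. prime q \<Longrightarrow> r \<in> zloc q"
  shows "r \<in> \<int>"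
proof -
  obtain u w where qo: "quotient_of r = (u, w)" by (cases "quotient_of r")
  have wp: "w > 0" using quotient_of_denom_pos[OF qo] .
  have eq: "r = of_int u / of_int w" using quotient_of_div[OF qo] .
  have "w = 1"
  proof (rule ccontr)
    assume "w \<noteq> 1"
    then have "nat w \<noteq> 1" using wp by simp
    then obtain q where "prime q" "q dvd nat w" using prime_factor_nat by blast
    then have "int q dvd int (nat w)" by (simp only: int_dvd_int_iff)
    then have "int q dvd w" using wp by simp
    then show False using assms[OF \<open>prime q\<close>] by (simp add: zloc_def qo)
  qed
  then show ?thesis using eq by simp
qed

lemma vq_eq_all:
  assumes r: "r > 0" and s: "s > 0" and v: "\<And>q. prime q \<Longrightarrow> vq q r = vq q s"
  shows "r = s"
proof -
  have "r / s \<in> \<int>"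
    using v r s by (intro zloc_all_int) (simp add: zloc_iff_vq vq_divide)
  moreover have "s / r \<in> \<int>"
    using v r s by (intro zloc_all_int) (simp add: zloc_iff_vq vq_divide)
  ultimately obtain m n where "r / s = of_int m" "s / r = of_int n" by (auto elim!: Ints_cases)
  note mn = this
  have "of_int (m * n) = (r / s) * (s / r)" using mn by simp
  also have "\<dots> = 1" using r s by simp
  finally have "m * n = 1" by (simp only: of_int_eq_1_iff)
  moreover have "m > 0" using mn r s
    by (metis divide_pos_pos of_int_0_less_iff)
  ultimately have "m = 1" using pos_zmult_eq_1_iff by blast
  then show ?thesis using \<open>r / s = of_int m\<close> s by simp
qed

lemma zloc_unit_inv:
  assumes q: "prime q" and "\<not> int q dvd s"
  shows "1 / of_int s \<in> zloc q"
proof -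
  have "1 / of_int s = (of_int 1 :: rat) / of_int s" by simp
  then show ?thesis using zloc_iff_frac[OF q] assms(2) by blast
qed

lemma vq_unit_int:
  assumes q: "prime q" and "\<not> int q dvd s"
  shows "vq q (of_int s) = 0"
  using assms by (subst vq_int) (auto simp: not_dvd_imp_multiplicity_0)

definition indep4 :: "(nat \<Rightarrow> quat) \<Rightarrow> bool" where
  "indep4 v \<longleftrightarrow> (\<forall>c :: nat \<Rightarrow> rat. (\<Sum>i<4. qscale (c i) (v i)) = 0 \<longrightarrow> (\<forall>i<4. c i = 0))"

definition lat :: "(nat \<Rightarrow> quat) \<Rightarrow> quat set" where
  "lat v = {(\<Sum>i<4. qscale (of_int (n i)) (v i)) | n :: nat \<Rightarrow> int. True}"

definition lsp :: "nat \<Rightarrow> (nat \<Rightarrow> quat) \<Rightarrow> quat set" where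
  "lsp q v = {(\<Sum>i<4. qscale (c i) (v i)) | c. \<forall>i<4. c i \<in> zloc q}"

lemma is_lattice_iff: "is_lattice L \<longleftrightarrow> (\<exists>v. indep4 v \<and> L = lat v)"
  unfolding is_lattice_def indep4_def lat_def by simp

interpretation QV: vector_space qscale
  by unfold_locales (simp_all add: qscale_add_right qscale_add_left)

definition "qE = {Quat 1 0 0 0, Quat 0 1 0 0, Quat 0 0 1 0, Quat 0 0 0 1}"

lemma qE_sum: "(\<Sum>x\<in>qE. qscale (f x) x) = Quat (f (Quat 1 0 0 0)) (f (Quat 0 1 0 0)) (f (Quat 0 0 1 0)) (f (Quat 0 0 0 1))"
  by (rule quat_eqI) (simp_all add: qE_def)

interpretation QF: finite_dimensional_vector_space qscale qE
proof unfold_locales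
  show "finite qE" by (simp add: qE_def)
  show "QV.independent qE"
  proof (rule QV.independent_if_scalars_zero)
    fix f x assume "(\<Sum>x\<in>qE. qscale (f x) x) = 0" "x \<in> qE"
    then show "f x = 0" unfolding qE_sum by (auto simp: qE_def zero_quat_def)
  qed (simp add: qE_def)
  show "QV.span qE = UNIV"
  proof -
    have "h \<in> range (\<lambda>u. \<Sum>v\<in>qE. qscale (u v) v)" for h
    proof
      define f where "f = (\<lambda>x. if x = Quat 1 0 0 0 then q0 h else if x = Quat 0 1 0 0 then q1 h
          else if x = Quat 0 0 1 0 then q2 h else q3 h)"
      show "h = (\<Sum>v\<in>qE. qscale (f v) v)" unfolding qE_sum by (rule quat_eqI) (simp_all add: f_def)
    qed simp
    then show ?thesis by (auto simp: QV.span_finite qE_def)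
  qed
qed

lemma card_qE: "card qE = 4"
  by (simp add: qE_def)

lemma indep4_inj: assumes "indep4 v" shows "inj_on v {..<4}"
proof (rule inj_onI, rule ccontr)
  fix i j assume ij: "i \<in> {..<4}" "j \<in> {..<4}" "v i = v j" "i \<noteq> j"
  define c where "c = (\<lambda>k. if k = i then (1::rat) else if k = j then -1 else 0)"
  have "(\<Sum>k<4. qscale (c k) (v k)) = (\<Sum>k<4. (if k = i then v i else 0) + (if k = j then - v j else 0))"
    by (rule sum.cong) (auto simp: c_def qscale_minus_left ij)
  also have "\<dots> = 0" using ij by (simp add: sum.distrib)
  finally have "c i = 0" using assms ij unfolding indep4_def by blast
  then show False by (simp add: c_def)
qed

lemma sum_reindex_v:
  assumes "inj_on v {..<4}"
  shows "(\<Sum>x\<in>v ` {..<4}. g x) = (\<Sum>i<4. g (v i))"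
  using sum.reindex[OF assms] by simp

lemma indep4_span:
  assumes "indep4 v"
  shows "\<exists>c. h = (\<Sum>i<4. qscale (c i) (v i))"
proof -
  have inj: "inj_on v {..<4}" using indep4_inj[OF assms] .
  have ind: "QV.independent (v ` {..<4})"
  proof (rule QV.independent_if_scalars_zero)
    fix f x assume s: "(\<Sum>x\<in>v ` {..<4}. qscale (f x) x) = 0" and x: "x \<in> v ` {..<4}"
    then have "(\<Sum>i<4. qscale (f (v i)) (v i)) = 0" using sum_reindex_v[OF inj, of "\<lambda>x. qscale (f x) x"] by simp
    then have "\<forall>i<4. f (v i) = 0" using assms[unfolded indep4_def, THEN spec[of _ "\<lambda>i. f (v i)"]] by simp
    then show "f x = 0" using x by auto
  qed simp
  have "card (v ` {..<4}) = 4" using card_image[OF inj] by simp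
  then have "UNIV \<subseteq> QV.span (v ` {..<4})"
    using QF.card_eq_dim[of "v ` {..<4}" UNIV] ind by (simp add: card_qE)
  then have "h \<in> range (\<lambda>u. \<Sum>x\<in>v ` {..<4}. qscale (u x) x)"
    using QV.span_finite[of "v ` {..<4}"] by auto
  then obtain u where "h = (\<Sum>x\<in>v ` {..<4}. qscale (u x) x)" by blast
  then have "h = (\<Sum>i<4. qscale (u (v i)) (v i))" using sum_reindex_v[OF inj] by simp
  then show ?thesis by (intro exI[of _ "\<lambda>i. u (v i)"])
qed

lemma sum4_combine:
  "(\<Sum>i<4. qscale (c i) (v i)) - (\<Sum>i<4. qscale (d i) (v i)) = (\<Sum>i<4. qscale (c i - d i) (v i))"
  by (simp add: sum_subtractf[symmetric] qscale_diff_left)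

lemma sum4_add:
  "(\<Sum>i<4. qscale (c i) (v i)) + (\<Sum>i<4. qscale (d i) (v i)) = (\<Sum>i<4. qscale (c i + d i) (v i))"
  by (simp add: sum.distrib[symmetric] qscale_add_left)

lemma sum4_scale:
  "qscale r (\<Sum>i<4. qscale (c i) (v i)) = (\<Sum>i<4. qscale (r * c i) (v i))"
  by (simp add: qscale_sum_right)

lemma indep4_unique:
  assumes "indep4 v" "(\<Sum>i<4. qscale (c i) (v i)) = (\<Sum>i<4. qscale (d i) (v i))" "i < 4"
  shows "c i = d i"
proof -
  have "(\<Sum>i<4. qscale (c i - d i) (v i)) = 0" using assms(2) sum4_combine[of c v d] by simp
  then show ?thesis using assms(1,3) unfolding indep4_def by fastforce
qed

lemma lat_mem: "x \<in> lat v \<longleftrightarrow> (\<exists>n. x = (\<Sum>i<4. qscale (of_int (n i)) (v i)))"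
  by (auto simp: lat_def)

lemma lsp_mem: "x \<in> lsp q v \<longleftrightarrow> (\<exists>c. (\<forall>i<4. c i \<in> zloc q) \<and> x = (\<Sum>i<4. qscale (c i) (v i)))"
  by (auto simp: lsp_def)

lemma lat_add: assumes "x \<in> lat v" "y \<in> lat v" shows "x + y \<in> lat v"
proof -
  obtain n n' where "x = (\<Sum>i<4. qscale (of_int (n i)) (v i))" "y = (\<Sum>i<4. qscale (of_int (n' i)) (v i))"
    using assms unfolding lat_mem by blast
  then have "x + y = (\<Sum>i<4. qscale (of_int (n i + n' i)) (v i))" by (simp add: sum4_add)
  then show ?thesis unfolding lat_mem by (intro exI[of _ "\<lambda>i. n i + n' i"])
qed

lemma lat_scale_int: assumes "x \<in> lat v" shows "qscale (of_int m) x \<in> lat v"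
proof -
  obtain n where "x = (\<Sum>i<4. qscale (of_int (n i)) (v i))"
    using assms unfolding lat_mem by blast
  then have "qscale (of_int m) x = (\<Sum>i<4. qscale (of_int (m * n i)) (v i))" by (simp add: sum4_scale)
  then show ?thesis unfolding lat_mem by (intro exI[of _ "\<lambda>i. m * n i"])
qed

lemma lat_minus: "x \<in> lat v \<Longrightarrow> - x \<in> lat v"
  using lat_scale_int[of x v "-1"] by (simp add: qscale_minus_left)

lemma lat_diff: "x \<in> lat v \<Longrightarrow> y \<in> lat v \<Longrightarrow> x - y \<in> lat v"
  using lat_add[of x v "- y"] lat_minus[of y v] by simp

lemma lat_zero: "0 \<in> lat v"
  using lat_mem[of 0 v] by (auto intro: exI[of _ "\<lambda>i. 0"])

lemma lat_sum: "(\<And>i. i \<in> A \<Longrightarrow> f i \<in> lat v) \<Longrightarrow> sum f A \<in> lat v"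
  by (induct A rule: infinite_finite_induct) (simp_all add: lat_zero lat_add)

lemma lat_basis: "i < 4 \<Longrightarrow> v i \<in> lat v"
proof -
  assume i: "i < 4"
  have "(\<Sum>j<4. qscale (of_int (if j = i then 1 else 0)) (v j)) = (\<Sum>j<4. if j = i then v j else 0)"
    by (rule sum.cong) auto
  also have "\<dots> = v i" using i by simp
  finally show ?thesis unfolding lat_mem by metis
qed

lemma lsp_add: assumes q: "prime q" and "x \<in> lsp q v" "y \<in> lsp q v" shows "x + y \<in> lsp q v"
proof -
  obtain c where "\<forall>i<4. c i \<in> zloc q" "x = (\<Sum>i<4. qscale (c i) (v i))"
    using assms(2) unfolding lsp_mem by blast
  moreover obtain c' where "\<forall>i<4. c' i \<in> zloc q" "y = (\<Sum>i<4. qscale (c' i) (v i))"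
    using assms(3) unfolding lsp_mem by blast
  ultimately have "x + y = (\<Sum>i<4. qscale (c i + c' i) (v i))" "\<forall>i<4. c i + c' i \<in> zloc q"
    by (simp_all add: sum4_add zloc_add[OF q])
  then show ?thesis unfolding lsp_mem by (intro exI[of _ "\<lambda>i. c i + c' i"]) simp
qed

lemma lsp_scale: assumes q: "prime q" and r: "r \<in> zloc q" and "x \<in> lsp q v" shows "qscale r x \<in> lsp q v"
proof -
  obtain c where "\<forall>i<4. c i \<in> zloc q" "x = (\<Sum>i<4. qscale (c i) (v i))"
    using assms unfolding lsp_mem by blast
  then have "qscale r x = (\<Sum>i<4. qscale (r * c i) (v i))" "\<forall>i<4. r * c i \<in> zloc q"
    by (simp_all add: sum4_scale zloc_mult[OF q r])
  then show ?thesis unfolding lsp_mem by (intro exI[of _ "\<lambda>i. r * c i"]) simp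
qed

lemma lsp_minus: "prime q \<Longrightarrow> x \<in> lsp q v \<Longrightarrow> - x \<in> lsp q v"
  using lsp_scale[of q "-1" x v] by (simp add: qscale_minus_left zloc_minus)

lemma lsp_diff: "prime q \<Longrightarrow> x \<in> lsp q v \<Longrightarrow> y \<in> lsp q v \<Longrightarrow> x - y \<in> lsp q v"
  using lsp_add[of q x v "- y"] lsp_minus[of q y v] by simp

lemma lat_lsp: assumes q: "prime q" and "x \<in> lat v" shows "x \<in> lsp q v"
proof -
  obtain n where "x = (\<Sum>i<4. qscale (of_int (n i)) (v i))"
    using assms unfolding lat_mem by blast
  moreover have "\<forall>i<4. (of_int (n i) :: rat) \<in> zloc q" using q by simp
  ultimately show ?thesis unfolding lsp_mem by (intro exI[of _ "\<lambda>i. of_int (n i)"]) simp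
qed

lemma lsp_zero: "prime q \<Longrightarrow> 0 \<in> lsp q v"
  using lat_lsp lat_zero by blast

lemma lsp_sum: "prime q \<Longrightarrow> (\<And>i. i \<in> A \<Longrightarrow> f i \<in> lsp q v) \<Longrightarrow> sum f A \<in> lsp q v"
  by (induct A rule: infinite_finite_induct) (simp_all add: lsp_zero lsp_add)

lemma loc_span_lat:
  assumes q: "prime q" and v: "indep4 v"
  shows "loc_span q (lat v) = lsp q v"
proof
  show "loc_span q (lat v) \<subseteq> lsp q v"
  proof
    fix x assume "x \<in> loc_span q (lat v)"
    then obtain F c where x: "x = (\<Sum>f\<in>F. qscale (c f) f)" "F \<subseteq> lat v" "\<forall>f\<in>F. c f \<in> zloc q"
      unfolding loc_span_def by blast
    show "x \<in> lsp q v" unfolding x(1)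
      using x(2,3) by (intro lsp_sum[OF q] lsp_scale[OF q] lat_lsp[OF q]) auto
  qed
next
  show "lsp q v \<subseteq> loc_span q (lat v)"
  proof
    fix x assume "x \<in> lsp q v"
    then obtain c where c: "\<forall>i<4. c i \<in> zloc q" "x = (\<Sum>i<4. qscale (c i) (v i))" unfolding lsp_mem by blast
    have inj: "inj_on v {..<4}" using indep4_inj[OF v] .
    define c' where "c' = (\<lambda>y. c (the_inv_into {..<4} v y))"
    have "(\<Sum>y\<in>v ` {..<4}. qscale (c' y) y) = (\<Sum>i<4. qscale (c' (v i)) (v i))"
      using sum_reindex_v[OF inj] .
    also have "\<dots> = x" unfolding c(2) c'_def
      by (rule sum.cong) (auto simp: the_inv_into_f_f[OF inj])
    finally have "x = (\<Sum>y\<in>v ` {..<4}. qscale (c' y) y)" by simp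
    moreover have "\<forall>y\<in>v ` {..<4}. c' y \<in> zloc q"
      using c(1) by (auto simp: c'_def the_inv_into_f_f[OF inj])
    moreover have "v ` {..<4} \<subseteq> lat v" using lat_basis by auto
    ultimately show "x \<in> loc_span q (lat v)" unfolding loc_span_def
      by (intro CollectI exI[of _ "v ` {..<4}"] exI[of _ c']) simp
  qed
qed

lemma local_global:
  assumes v: "indep4 v" and h: "\<And>q. prime q \<Longrightarrow> h \<in> lsp q v"
  shows "h \<in> lat v"
proof -
  obtain c where c: "h = (\<Sum>i<4. qscale (c i) (v i))" using indep4_span[OF v] by blast
  have "c i \<in> zloc q" if "prime q" "i < 4" for q i
  proof -
    have "h \<in> lsp q v" using h that(1) by blast
    then obtain d where d: "\<forall>i<4. d i \<in> zloc q" "h = (\<Sum>i<4. qscale (d i) (v i))"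
      unfolding lsp_mem by blast
    have "c i = d i" using indep4_unique[OF v _ that(2), of c d] c d(2) by simp
    then show ?thesis using d(1) that(2) by simp
  qed
  then have "\<forall>i<4. c i \<in> \<int>" using zloc_all_int by blast
  then have "\<forall>i. \<exists>m. i < 4 \<longrightarrow> c i = of_int m" by (metis Ints_cases)
  then obtain n where n: "\<forall>i<4. c i = of_int (n i)" by metis
  have "h = (\<Sum>i<4. qscale (of_int (n i)) (v i))" unfolding c by (rule sum.cong) (auto simp: n)
  then show ?thesis unfolding lat_mem by (intro exI[of _ n])
qed

lemma clear_denoms:
  fixes c :: "nat \<Rightarrow> rat"
  shows "\<exists>s::int. s > 0 \<and> (\<forall>i<n. of_int s * c i \<in> \<int>) \<and>
    (\<forall>q. prime q \<longrightarrow> (\<forall>i<n. c i \<in> zloc q) \<longrightarrow> \<not> int q dvd s)"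
proof (induct n)
  case 0 then show ?case by (auto intro!: exI[of _ 1] simp: prime_gt_1_nat)
next
  case (Suc n)
  then obtain s where s: "s > 0" "\<forall>i<n. of_int s * c i \<in> \<int>"
    "\<forall>q. prime q \<longrightarrow> (\<forall>i<n. c i \<in> zloc q) \<longrightarrow> \<not> int q dvd s" by blast
  define w where "w = snd (quotient_of (c n))"
  have wp: "w > 0" unfolding w_def using quotient_of_denom_pos' .
  have cw: "of_int w * c n \<in> \<int>"
  proof -
    obtain u w' where qo: "quotient_of (c n) = (u, w')" by (cases "quotient_of (c n)")
    have "c n = of_int u / of_int w'" using quotient_of_div[OF qo] .
    moreover have "w = w'" unfolding w_def qo by simp
    ultimately have "of_int w * c n = of_int u" using wp by simp
    then show ?thesis by simp
  qed
  have "of_int (s * w) * c i \<in> \<int>" if "i < Suc n" for i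
  proof (cases "i = n")
    case True
    have "of_int (s * w) * c i = of_int s * (of_int w * c n)" using True by (simp add: mult.assoc)
    then show ?thesis using cw Ints_mult Ints_of_int by metis
  next
    case False
    then have "i < n" using that by simp
    have "of_int (s * w) * c i = of_int w * (of_int s * c i)" by (simp add: mult.assoc mult.left_commute)
    then show ?thesis using s(2) \<open>i < n\<close> Ints_mult Ints_of_int by metis
  qed
  moreover have "\<not> int q dvd s * w" if "prime q" "\<forall>i<Suc n. c i \<in> zloc q" for q
  proof -
    have "\<not> int q dvd s" using s(3) that by simp
    moreover have "\<not> int q dvd w" using that(2) unfolding w_def zloc_def by simp
    ultimately show ?thesis using that(1) by (simp add: prime_dvd_mult_iff)
  qed
  ultimately show ?case using s(1) wp by (intro exI[of _ "s * w"]) simp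
qed

lemma sum4_int_lat:
  assumes "\<forall>i<4. d i \<in> \<int>"
  shows "(\<Sum>i<4. qscale (d i) (v i)) \<in> lat v"
proof -
  have "\<forall>i. \<exists>m. i < 4 \<longrightarrow> d i = of_int m" using assms by (metis Ints_cases)
  then obtain n where n: "\<forall>i<4. d i = of_int (n i)" by metis
  have "(\<Sum>i<4. qscale (d i) (v i)) = (\<Sum>i<4. qscale (of_int (n i)) (v i))" by (rule sum.cong) (auto simp: n)
  then show ?thesis unfolding lat_mem by (intro exI[of _ n])
qed

lemma lsp_clear:
  assumes q: "prime q" and h: "h \<in> lsp q v"
  shows "\<exists>s::int. s > 0 \<and> \<not> int q dvd s \<and> qscale (of_int s) h \<in> lat v"
proof -
  obtain c where c: "\<forall>i<4. c i \<in> zloc q" "h = (\<Sum>i<4. qscale (c i) (v i))" using h unfolding lsp_mem by blast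
  obtain s :: int where s: "s > 0" "\<forall>i<4. of_int s * c i \<in> \<int>"
    "\<forall>q. prime q \<longrightarrow> (\<forall>i<4. c i \<in> zloc q) \<longrightarrow> \<not> int q dvd s"
    using clear_denoms[of 4 c] by blast
  have "qscale (of_int s) h = (\<Sum>i<4. qscale (of_int s * c i) (v i))" unfolding c(2) by (simp add: sum4_scale)
  then show ?thesis using s q c(1) sum4_int_lat[of "\<lambda>i. of_int s * c i" v] by (intro exI[of _ s]) auto
qed

lemma span_clear:
  assumes v: "indep4 v"
  shows "\<exists>s::int. s > 0 \<and> qscale (of_int s) h \<in> lat v"
proof -
  obtain c where c: "h = (\<Sum>i<4. qscale (c i) (v i))" using indep4_span[OF v] by blast
  obtain s :: int where s: "s > 0" "\<forall>i<4. of_int s * c i \<in> \<int>"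
    using clear_denoms[of 4 c] by blast
  have "qscale (of_int s) h = (\<Sum>i<4. qscale (of_int s * c i) (v i))" unfolding c by (simp add: sum4_scale)
  then show ?thesis using s sum4_int_lat[of "\<lambda>i. of_int s * c i" v] by (intro exI[of _ s]) auto
qed

definition qlinear :: "(quat \<Rightarrow> quat) \<Rightarrow> bool" where
  "qlinear f \<longleftrightarrow> (\<forall>x y. f (x + y) = f x + f y) \<and> (\<forall>r x. f (qscale r x) = qscale r (f x))"

lemma qlinear_zero: "qlinear f \<Longrightarrow> f 0 = 0"
  unfolding qlinear_def by (metis qscale_simps(2))

lemma qlinear_sum: "qlinear f \<Longrightarrow> f (sum g A) = (\<Sum>x\<in>A. f (g x))"
  by (induct A rule: infinite_finite_induct) (simp_all add: qlinear_zero, simp add: qlinear_def)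

lemma qlinear_sum4: fixes v :: "nat \<Rightarrow> quat" shows "qlinear f \<Longrightarrow> f (\<Sum>i<4. qscale (c i) (v i)) = (\<Sum>i<4. qscale (c i) (f (v i)))"
  by (simp add: qlinear_sum) (simp add: qlinear_def)

lemma qlinear_indep:
  assumes f: "qlinear f" and inj: "\<And>x. f x = 0 \<Longrightarrow> x = 0" and v: "indep4 v"
  shows "indep4 (f \<circ> v)"
  unfolding indep4_def
proof (rule allI, rule impI)
  fix c assume "(\<Sum>i<4. qscale (c i) ((f \<circ> v) i)) = 0"
  then have "f (\<Sum>i<4. qscale (c i) (v i)) = 0" using qlinear_sum4[OF f] by simp
  then have "(\<Sum>i<4. qscale (c i) (v i)) = 0" using inj by blast
  then show "\<forall>i<4. c i = 0" using v unfolding indep4_def by blast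
qed

lemma qlinear_lat: assumes f: "qlinear f" shows "f ` lat v = lat (f \<circ> v)"
proof
  show "f ` lat v \<subseteq> lat (f \<circ> v)"
  proof
    fix y assume "y \<in> f ` lat v"
    then obtain x where "x \<in> lat v" "y = f x" by blast
    then obtain n where "y = f (\<Sum>i<4. qscale (of_int (n i)) (v i))" unfolding lat_mem by blast
    then have "y = (\<Sum>i<4. qscale (of_int (n i)) ((f \<circ> v) i))" using qlinear_sum4[OF f] by simp
    then show "y \<in> lat (f \<circ> v)" unfolding lat_mem by (intro exI[of _ n])
  qed
  show "lat (f \<circ> v) \<subseteq> f ` lat v"
  proof
    fix y assume "y \<in> lat (f \<circ> v)"
    then obtain n where y: "y = (\<Sum>i<4. qscale (of_int (n i)) ((f \<circ> v) i))" unfolding lat_mem by blast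
    have "y = f (\<Sum>i<4. qscale (of_int (n i)) (v i))" using qlinear_sum4[OF f] y by simp
    moreover have "(\<Sum>i<4. qscale (of_int (n i)) (v i)) \<in> lat v" unfolding lat_mem by (intro exI[of _ n]) simp
    ultimately show "y \<in> f ` lat v" by blast
  qed
qed

lemma qlinear_lsp: assumes f: "qlinear f" shows "f ` lsp q v = lsp q (f \<circ> v)"
proof
  show "f ` lsp q v \<subseteq> lsp q (f \<circ> v)"
  proof
    fix y assume "y \<in> f ` lsp q v"
    then obtain x where "x \<in> lsp q v" "y = f x" by blast
    then obtain c where c: "\<forall>i<4. c i \<in> zloc q" "y = f (\<Sum>i<4. qscale (c i) (v i))" unfolding lsp_mem by blast
    then have "y = (\<Sum>i<4. qscale (c i) ((f \<circ> v) i))" using qlinear_sum4[OF f] by simp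
    then show "y \<in> lsp q (f \<circ> v)" using c(1) unfolding lsp_mem by (intro exI[of _ c]) simp
  qed
  show "lsp q (f \<circ> v) \<subseteq> f ` lsp q v"
  proof
    fix y assume "y \<in> lsp q (f \<circ> v)"
    then obtain c where c: "\<forall>i<4. c i \<in> zloc q" "y = (\<Sum>i<4. qscale (c i) ((f \<circ> v) i))" unfolding lsp_mem by blast
    have "y = f (\<Sum>i<4. qscale (c i) (v i))" using qlinear_sum4[OF f] c(2) by simp
    moreover have "(\<Sum>i<4. qscale (c i) (v i)) \<in> lsp q v" using c(1) unfolding lsp_mem by (intro exI[of _ c]) simp
    ultimately show "y \<in> f ` lsp q v" by blast
  qed
qed

lemma qlinear_rmul: "qlinear (\<lambda>y. qmul a b y x)"
  by (simp add: qlinear_def qmul_add_left qmul_scale_left)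

lemma qlinear_lmul: "qlinear (\<lambda>y. qmul a b x y)"
  by (simp add: qlinear_def qmul_add_right qmul_scale_right)

lemma qlinear_scale: "qlinear (qscale r)"
  by (simp add: qlinear_def qscale_add_right mult.commute)

definition qbil :: "rat \<Rightarrow> rat \<Rightarrow> quat \<Rightarrow> quat \<Rightarrow> rat" where
  "qbil a b x y = 2 * (q0 x * q0 y - a * q1 x * q1 y - b * q2 x * q2 y + a * b * q3 x * q3 y)"

lemma qnrd_add: "qnrd a b (x + y) = qnrd a b x + qnrd a b y + qbil a b x y"
  by (simp add: qnrd_def qbil_def power2_eq_square algebra_simps)

lemma qbil_add_left: "qbil a b (x + y) z = qbil a b x z + qbil a b y z"
  by (simp add: qbil_def algebra_simps)

lemma qbil_scale_left: "qbil a b (qscale r x) z = r * qbil a b x z"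
  by (simp add: qbil_def algebra_simps)

lemma qbil_scale_right: "qbil a b z (qscale r x) = r * qbil a b z x"
  by (simp add: qbil_def algebra_simps)

lemma qbil_zero_left [simp]: "qbil a b 0 z = 0"
  by (simp add: qbil_def)

lemma qbil_sum_left: "qbil a b (sum f A) z = (\<Sum>i\<in>A. qbil a b (f i) z)"
  by (induct A rule: infinite_finite_induct) (simp_all add: qbil_add_left)

lemma nrd_expand_closed:
  fixes R M :: "rat set" and v :: "nat \<Rightarrow> quat"
  assumes M0: "0 \<in> M" and Madd: "\<And>x y. x \<in> M \<Longrightarrow> y \<in> M \<Longrightarrow> x + y \<in> M"
    and Mmul: "\<And>r x. r \<in> R \<Longrightarrow> x \<in> M \<Longrightarrow> r * x \<in> M"
    and Rmul: "\<And>r s. r \<in> R \<Longrightarrow> s \<in> R \<Longrightarrow> r * s \<in> R"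
    and c: "\<forall>i<4. c i \<in> R"
    and nv: "\<forall>i<4. qnrd a b (v i) \<in> M" and bv: "\<forall>i<4. \<forall>j<4. qbil a b (v i) (v j) \<in> M"
  shows "qnrd a b (\<Sum>i<4. qscale (c i) (v i)) \<in> M"
proof -
  have Msum: "(\<And>i. i \<in> A \<Longrightarrow> f i \<in> M) \<Longrightarrow> sum f A \<in> M" for f and A :: "nat set"
    by (induct A rule: infinite_finite_induct) (simp_all add: M0 Madd)
  have "n \<le> 4 \<Longrightarrow> qnrd a b (\<Sum>i<n. qscale (c i) (v i)) \<in> M" for n
  proof (induct n)
    case 0 then show ?case using M0 by (simp add: qnrd_def)
  next
    case (Suc n)
    have "qnrd a b (\<Sum>i<Suc n. qscale (c i) (v i)) =
        qnrd a b (\<Sum>i<n. qscale (c i) (v i)) + qnrd a b (qscale (c n) (v n)) +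
        qbil a b (\<Sum>i<n. qscale (c i) (v i)) (qscale (c n) (v n))"
      by (simp add: qnrd_add)
    also have "qbil a b (\<Sum>i<n. qscale (c i) (v i)) (qscale (c n) (v n)) =
        c n * (\<Sum>i<n. c i * qbil a b (v i) (v n))"
      by (simp add: qbil_sum_left qbil_scale_left qbil_scale_right sum_distrib_left mult_ac)
    also have "qnrd a b (qscale (c n) (v n)) = (c n * c n) * qnrd a b (v n)"
      by (simp add: qnrd_scale power2_eq_square)
    finally have eq: "qnrd a b (\<Sum>i<Suc n. qscale (c i) (v i)) =
        qnrd a b (\<Sum>i<n. qscale (c i) (v i)) + (c n * c n) * qnrd a b (v n) +
        c n * (\<Sum>i<n. c i * qbil a b (v i) (v n))" .
    have "qnrd a b (\<Sum>i<n. qscale (c i) (v i)) \<in> M" using Suc by simp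
    moreover have "(c n * c n) * qnrd a b (v n) \<in> M" using Suc.prems c nv by (simp add: Mmul Rmul)
    moreover have "(\<Sum>i<n. c i * qbil a b (v i) (v n)) \<in> M"
      using Suc.prems c bv by (intro Msum Mmul) auto
    then have "c n * (\<Sum>i<n. c i * qbil a b (v i) (v n)) \<in> M" using Suc.prems c by (simp add: Mmul)
    ultimately show ?case unfolding eq by (intro Madd)
  qed
  then show ?thesis by simp
qed

lemma int_span_mem: "x \<in> int_span S \<longleftrightarrow> (\<exists>F c. finite F \<and> F \<subseteq> S \<and> x = (\<Sum>r\<in>F. of_int (c r) * r))"
  unfolding int_span_def by blast

lemma int_span_base: "x \<in> S \<Longrightarrow> x \<in> int_span S"
  unfolding int_span_mem by (intro exI[of _ "{x}"] exI[of _ "\<lambda>_. 1"]) simp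

lemma int_span_zero: "0 \<in> int_span S"
  unfolding int_span_mem by (intro exI[of _ "{}"]) simp

lemma int_span_add:
  assumes "x \<in> int_span S" "y \<in> int_span S" shows "x + y \<in> int_span S"
proof -
  obtain F c where F: "finite F" "F \<subseteq> S" "x = (\<Sum>r\<in>F. of_int (c r) * r)" using assms(1) unfolding int_span_mem by blast
  obtain G d where G: "finite G" "G \<subseteq> S" "y = (\<Sum>r\<in>G. of_int (d r) * r)" using assms(2) unfolding int_span_mem by blast
  define e where "e = (\<lambda>r. (if r \<in> F then c r else 0) + (if r \<in> G then d r else 0))"
  have "(\<Sum>r\<in>F \<union> G. of_int (e r) * r) = (\<Sum>r\<in>F \<union> G. of_int (if r \<in> F then c r else 0) * r) +
      (\<Sum>r\<in>F \<union> G. of_int (if r \<in> G then d r else 0) * r)"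
    unfolding e_def by (simp add: sum.distrib distrib_right)
  also have "(\<Sum>r\<in>F \<union> G. of_int (if r \<in> F then c r else 0) * r) = x"
    unfolding F(3) using F(1) G(1) by (intro sum.mono_neutral_cong_right) auto
  also have "(\<Sum>r\<in>F \<union> G. of_int (if r \<in> G then d r else 0) * r) = y"
    unfolding G(3) using F(1) G(1) by (intro sum.mono_neutral_cong_right) auto
  finally show ?thesis unfolding int_span_mem using F G by (intro exI[of _ "F \<union> G"] exI[of _ e]) auto
qed

lemma int_span_mult:
  assumes "x \<in> int_span S" shows "of_int k * x \<in> int_span S"
proof -
  obtain F c where F: "finite F" "F \<subseteq> S" "x = (\<Sum>r\<in>F. of_int (c r) * r)" using assms(1) unfolding int_span_mem by blast
  have "of_int k * x = (\<Sum>r\<in>F. of_int (k * c r) * r)" unfolding F(3) by (simp add: sum_distrib_left mult.assoc)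
  then show ?thesis unfolding int_span_mem using F by (intro exI[of _ F] exI[of _ "\<lambda>r. k * c r"]) auto
qed

lemma int_span_minimal:
  assumes M0: "0 \<in> M" and Madd: "\<And>x y. x \<in> M \<Longrightarrow> y \<in> M \<Longrightarrow> x + y \<in> M"
    and Mmul: "\<And>k x. x \<in> M \<Longrightarrow> of_int k * x \<in> M" and S: "S \<subseteq> M"
  shows "int_span S \<subseteq> M"
proof
  fix x assume "x \<in> int_span S"
  then obtain F c where F: "finite F" "F \<subseteq> S" "x = (\<Sum>r\<in>F. of_int (c r) * r)" unfolding int_span_mem by blast
  have "(\<Sum>r\<in>F. of_int (c r) * r) \<in> M" using F(1,2)
    by (induct F rule: finite_induct) (use S M0 in \<open>auto intro!: Madd Mmul\<close>)
  then show "x \<in> M" using F(3) by simp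
qed

lemma int_span_scale: "int_span ((\<lambda>r. k * r) ` S) = (\<lambda>r. k * r) ` int_span S"
proof
  show "int_span ((*) k ` S) \<subseteq> (*) k ` int_span S"
  proof (rule int_span_minimal)
    show "0 \<in> (*) k ` int_span S" using int_span_zero by force
    show "x + y \<in> (*) k ` int_span S" if A: "x \<in> (*) k ` int_span S" and B: "y \<in> (*) k ` int_span S" for x y
    proof -
      obtain x' y' where "x' \<in> int_span S" "y' \<in> int_span S" "x = k * x'" "y = k * y'" using A B by blast
      then show ?thesis by (intro image_eqI[of _ _ "x' + y'"]) (auto simp: int_span_add distrib_left)
    qed
    show "of_int m * x \<in> (*) k ` int_span S" if A: "x \<in> (*) k ` int_span S" for m x
    proof -
      obtain x' where "x' \<in> int_span S" "x = k * x'" using A by blast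
      then show ?thesis by (intro image_eqI[of _ _ "of_int m * x'"]) (auto simp: int_span_mult)
    qed
    show "(*) k ` S \<subseteq> (*) k ` int_span S" using int_span_base by blast
  qed
  show "(*) k ` int_span S \<subseteq> int_span ((*) k ` S)"
  proof -
    have "int_span S \<subseteq> {x. k * x \<in> int_span ((*) k ` S)}"
    proof (rule int_span_minimal)
      show "0 \<in> {x. k * x \<in> int_span ((*) k ` S)}" using int_span_zero by simp
      show "x + y \<in> {x. k * x \<in> int_span ((*) k ` S)}"
        if "x \<in> {x. k * x \<in> int_span ((*) k ` S)}" "y \<in> {x. k * x \<in> int_span ((*) k ` S)}" for x y
        using int_span_add[of "k * x" _ "k * y"] that by (simp add: distrib_left)
      show "of_int m * x \<in> {x. k * x \<in> int_span ((*) k ` S)}"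
        if "x \<in> {x. k * x \<in> int_span ((*) k ` S)}" for m x
        using int_span_mult[of "k * x" _ m] that by (simp add: mult.left_commute)
      show "S \<subseteq> {x. k * x \<in> int_span ((*) k ` S)}" by (auto intro: int_span_base)
    qed
    then show ?thesis by blast
  qed
qed

lemma int_subgroup_cyclic:
  fixes H :: "int set"
  assumes H0: "0 \<in> H" and Hadd: "\<And>x y. x \<in> H \<Longrightarrow> y \<in> H \<Longrightarrow> x + y \<in> H"
    and Hmul: "\<And>k x. x \<in> H \<Longrightarrow> k * x \<in> H" and ne: "h0 \<in> H" "h0 \<noteq> 0"
  shows "\<exists>g>0. H = {n * g | n. True}"
proof -
  have "\<bar>h0\<bar> \<in> H"
  proof (cases "h0 \<ge> 0")
    case False then show ?thesis using Hmul[OF ne(1), of "-1"] by simp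
  qed (use ne in simp)
  define n0 where "n0 = nat \<bar>h0\<bar>"
  have n0: "int n0 \<in> H" "n0 > 0" unfolding n0_def using \<open>\<bar>h0\<bar> \<in> H\<close> ne(2) by simp_all
  define m where "m = (LEAST m::nat. int m \<in> H \<and> m > 0)"
  have m: "int m \<in> H" "m > 0" using LeastI[of "\<lambda>m. int m \<in> H \<and> m > 0" n0] n0 unfolding m_def by auto
  have mmin: "m \<le> k" if "int k \<in> H" "k > 0" for k using Least_le[of "\<lambda>m. int m \<in> H \<and> m > 0" k] that unfolding m_def by auto
  have "H = {n * int m | n. True}"
  proof
    show "H \<subseteq> {n * int m | n. True}"
    proof
      fix x assume x: "x \<in> H"
      have eqm: "x mod int m = x + (- (x div int m)) * int m"
        by (simp add: minus_div_mult_eq_mod[symmetric])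
      have "(- (x div int m)) * int m \<in> H" using Hmul[OF m(1)] .
      then have xm: "x mod int m \<in> H" unfolding eqm using Hadd[OF x] by blast
      have r: "x mod int m \<ge> 0" "x mod int m < int m" using m by simp_all
      have "x mod int m = 0"
      proof (rule ccontr)
        assume "x mod int m \<noteq> 0"
        then have "nat (x mod int m) > 0" using r by simp
        moreover have "int (nat (x mod int m)) \<in> H" using xm r by simp
        ultimately have "m \<le> nat (x mod int m)" using mmin by blast
        then show False using r by linarith
      qed
      then have "x = (x div int m) * int m" by (metis div_mult_mod_eq add_0_right)
      then show "x \<in> {n * int m | n. True}" by blast
    qed
    show "{n * int m | n. True} \<subseteq> H" using m Hmul by auto
  qed
  then show ?thesis using m by (intro exI[of _ "int m"]) auto
qed

lemma rat_subgroup_cyclic: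
  fixes H :: "rat set"
  assumes H0: "0 \<in> H" and Hadd: "\<And>x y. x \<in> H \<Longrightarrow> y \<in> H \<Longrightarrow> x + y \<in> H"
    and Hmul: "\<And>k x. x \<in> H \<Longrightarrow> of_int k * x \<in> H" and ne: "h0 \<in> H" "h0 \<noteq> 0"
    and D: "D > 0" "\<And>x. x \<in> H \<Longrightarrow> of_int D * x \<in> \<int>"
  shows "\<exists>r>0. H = {of_int n * r | n. True}"
proof -
  define H' where "H' = {z::int. of_int z / of_int D \<in> H}"
  have memH: "x \<in> H \<longleftrightarrow> (\<exists>z\<in>H'. x = of_int z / of_int D)" for x
  proof
    assume x: "x \<in> H"
    have "of_int D * x \<in> \<int>" using D(2) x by blast
    then obtain z where z: "of_int D * x = of_int z" by (elim Ints_cases)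
    then have "x = of_int z / of_int D" using D(1) by (simp add: field_simps)
    then show "\<exists>z\<in>H'. x = of_int z / of_int D" using x unfolding H'_def by auto
  next
    assume "\<exists>z\<in>H'. x = of_int z / of_int D"
    then show "x \<in> H" unfolding H'_def by auto
  qed
  have "h0 \<in> H" using ne(1) .
  then obtain z0 where "z0 \<in> H'" "h0 = of_int z0 / of_int D" using memH by blast
  then have z0: "z0 \<in> H'" "z0 \<noteq> 0" using ne(2) by auto
  have "0 \<in> H'" using H0 unfolding H'_def by simp
  moreover have "x + y \<in> H'" if A: "x \<in> H'" and B: "y \<in> H'" for x y
  proof -
    have "of_int x / of_int D + of_int y / of_int D \<in> H" using A B Hadd unfolding H'_def by blast
    then show ?thesis unfolding H'_def by (simp add: add_divide_distrib)
  qed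
  moreover have "k * x \<in> H'" if A: "x \<in> H'" for k x
  proof -
    have "of_int k * (of_int x / of_int D) \<in> H" using A Hmul unfolding H'_def by blast
    then show ?thesis unfolding H'_def by simp
  qed
  ultimately obtain g where g: "g > 0" "H' = {n * g | n. True}"
    using int_subgroup_cyclic[of H' z0] z0 by blast
  define r :: rat where "r = of_int g / of_int D"
  have rpos: "r > 0" unfolding r_def using g D(1) by simp
  have "H = {of_int n * r | n. True}"
  proof
    show "H \<subseteq> {of_int n * r | n. True}"
    proof
      fix x assume "x \<in> H"
      then obtain z where "z \<in> H'" "x = of_int z / of_int D" using memH by blast
      moreover then obtain n where "z = n * g" using g(2) by blast
      ultimately have "x = of_int n * r" unfolding r_def by simp
      then show "x \<in> {of_int n * r | n. True}" by blast
    qed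
    show "{of_int n * r | n. True} \<subseteq> H"
    proof
      fix x assume "x \<in> {of_int n * r | n. True}"
      then obtain n where "x = of_int n * r" by blast
      then have "x = of_int (n * g) / of_int D" unfolding r_def by simp
      moreover have "n * g \<in> H'" using g(2) by blast
      ultimately show "x \<in> H" using memH by blast
    qed
  qed
  then show ?thesis using rpos by blast
qed

lemma indep4_nonzero: "indep4 v \<Longrightarrow> i < 4 \<Longrightarrow> v i \<noteq> 0"
proof
  assume v: "indep4 v" and i: "i < 4" and z: "v i = 0"
  define c where "c = (\<lambda>k. if k = i then (1::rat) else 0)"
  have "(\<Sum>k<4. qscale (c k) (v k)) = (\<Sum>k<4. if k = i then v i else 0)"
    by (rule sum.cong) (auto simp: c_def)
  also have "\<dots> = 0" using z by simp
  finally have "c i = 0" using v i unfolding indep4_def by blast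
  then show False by (simp add: c_def)
qed

lemma qbil_as_nrd: "qbil a b x y = qnrd a b (x + y) - qnrd a b x - qnrd a b y"
  by (simp add: qnrd_add)

lemma lat_norm_exists:
  assumes ab: "a < 0" "b < 0" and v: "indep4 v"
  shows "\<exists>r>0. int_span (qnrd a b ` lat v) = {of_int n * r | n. True}"
proof -
  define S where "S = qnrd a b ` lat v"
  define cc where "cc = (\<lambda>k. if k < 4 then qnrd a b (v k) else qbil a b (v ((k - 4) div 4)) (v ((k - 4) mod 4)))"
  obtain D :: int where D: "D > 0" "\<forall>k<20. of_int D * cc k \<in> \<int>"
    using clear_denoms[of 20 cc] by blast
  define M where "M = {x::rat. of_int D * x \<in> \<int>}"
  have M0: "0 \<in> M" unfolding M_def by simp
  have Madd: "x + y \<in> M" if "x \<in> M" "y \<in> M" for x y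
    using that unfolding M_def by (simp add: distrib_left)
  have Mmul: "of_int k * x \<in> M" if "x \<in> M" for k x
  proof -
    have "of_int D * (of_int k * x) = of_int k * (of_int D * x)" by (simp add: mult.left_commute)
    moreover have "of_int k * (of_int D * x) \<in> \<int>" using that unfolding M_def by (rule_tac Ints_mult) auto
    ultimately show ?thesis unfolding M_def by (simp only: mem_Collect_eq)
  qed
  have nvM: "\<forall>i<4. qnrd a b (v i) \<in> M"
  proof (intro allI impI)
    fix i :: nat assume i: "i < 4"
    then have "of_int D * cc i \<in> \<int>" using D(2) by simp
    then show "qnrd a b (v i) \<in> M" using i unfolding M_def cc_def by simp
  qed
  have bvM: "\<forall>i<4. \<forall>j<4. qbil a b (v i) (v j) \<in> M"
  proof (intro allI impI)
    fix i j :: nat assume ij: "i < 4" "j < 4"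
    have "4 + 4 * i + j < 20" using ij by simp
    then have "of_int D * cc (4 + 4 * i + j) \<in> \<int>" using D(2) by blast
    moreover have "cc (4 + 4 * i + j) = qbil a b (v i) (v j)" unfolding cc_def using ij by simp
    ultimately show "qbil a b (v i) (v j) \<in> M" unfolding M_def by simp
  qed
  have SM: "S \<subseteq> M"
  proof
    fix x assume "x \<in> S"
    then obtain y where "y \<in> lat v" "x = qnrd a b y" unfolding S_def by blast
    then obtain n where "x = qnrd a b (\<Sum>i<4. qscale (of_int (n i)) (v i))" unfolding lat_mem by blast
    moreover have "qnrd a b (\<Sum>i<4. qscale (of_int (n i)) (v i)) \<in> M"
    proof (rule nrd_expand_closed[where R = "\<int>"])
      show "r * x \<in> M" if "r \<in> \<int>" "x \<in> M" for r x
        using that Mmul by (elim Ints_cases) simp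
      show "r * s \<in> \<int>" if "r \<in> \<int>" "s \<in> \<int>" for r s :: rat using that by (rule Ints_mult)
    qed (use M0 Madd nvM bvM in auto)
    ultimately show "x \<in> M" by simp
  qed
  have HM: "int_span S \<subseteq> M" by (rule int_span_minimal[OF M0 Madd Mmul SM])
  have "qnrd a b (v 0) > 0" using indep4_nonzero[OF v, of 0] qnrd_pos[OF ab] by simp
  then have ne: "qnrd a b (v 0) \<in> int_span S" "qnrd a b (v 0) \<noteq> 0"
    using int_span_base[of _ S] lat_basis[of 0 v] unfolding S_def by auto
  show ?thesis unfolding S_def[symmetric]
  proof (rule rat_subgroup_cyclic[OF int_span_zero _ int_span_mult ne D(1)])
    show "x + y \<in> int_span S" if "x \<in> int_span S" "y \<in> int_span S" for x y
      using that by (rule int_span_add)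
    show "of_int D * x \<in> \<int>" if "x \<in> int_span S" for x
      using that HM unfolding M_def by blast
  qed
qed

lemma rat_cyclic_gen_unique:
  fixes r s :: rat
  assumes "r > 0" "s > 0" "{of_int n * r | n. True} = {of_int n * s | n. True}"
  shows "r = s"
proof -
  have "r = of_int 1 * r" by simp
  then have "r \<in> {of_int n * r | n. True}" by blast
  then have "r \<in> {of_int n * s | n. True}" unfolding assms(3)[symmetric] .
  then obtain n where n: "r = of_int n * s" by blast
  have "s = of_int 1 * s" by simp
  then have "s \<in> {of_int n * s | n. True}" by blast
  then have "s \<in> {of_int n * r | n. True}" unfolding assms(3) .
  then obtain m where m: "s = of_int m * r" by blast
  have "r = of_int (n * m) * r" using n m by simp
  then have "of_int (n * m) = (1::rat)" using assms(1) by simp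
  then have nm: "n * m = 1" by (simp only: of_int_eq_1_iff)
  have "n > 0" using n assms by (metis of_int_0_less_iff zero_less_mult_pos2)
  then have "n = 1" using nm pos_zmult_eq_1_iff by blast
  then show ?thesis using n by simp
qed

lemma lat_norm_char:
  assumes ab: "a < 0" "b < 0" and v: "indep4 v"
  shows "lat_norm a b (lat v) > 0 \<and> int_span (qnrd a b ` lat v) = {of_int n * lat_norm a b (lat v) | n. True}"
proof -
  obtain r where r: "r > 0" "int_span (qnrd a b ` lat v) = {of_int n * r | n. True}"
    using lat_norm_exists[OF ab v] by blast
  have "lat_norm a b (lat v) = r"
    unfolding lat_norm_def
  proof (rule the_equality)
    show "r > 0 \<and> int_span (qnrd a b ` lat v) = {of_int n * r | n. True}" using r by simp
    show "s = r" if A: "s > 0 \<and> int_span (qnrd a b ` lat v) = {of_int n * s | n. True}" for s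
    proof -
      have "{of_int n * s | n. True} = {of_int n * r | n. True}" using A r(2) by (simp only:)
      then show ?thesis using rat_cyclic_gen_unique[of s r] A r(1) by blast
    qed
  qed
  then show ?thesis using r by simp
qed

lemma lat_norm_eqI:
  assumes ab: "a < 0" "b < 0" and v: "indep4 v" and r: "r > 0" "int_span (qnrd a b ` lat v) = {of_int n * r | n. True}"
  shows "lat_norm a b (lat v) = r"
proof -
  have c: "lat_norm a b (lat v) > 0" "int_span (qnrd a b ` lat v) = {of_int n * lat_norm a b (lat v) | n. True}"
    using lat_norm_char[OF ab v] by auto
  have "{of_int n * lat_norm a b (lat v) | n. True} = {of_int n * r | n. True}" using c(2) r(2) by (simp only:)
  then show ?thesis using rat_cyclic_gen_unique[of "lat_norm a b (lat v)" r] c(1) r(1) by blast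
qed

lemma norm_loc_upper:
  assumes ab: "a < 0" "b < 0" and v: "indep4 v" and q: "prime q" and w: "w \<in> lsp q v"
  shows "qnrd a b w / lat_norm a b (lat v) \<in> zloc q"
proof -
  define N where "N = lat_norm a b (lat v)"
  have N: "N > 0" "int_span (qnrd a b ` lat v) = {of_int n * N | n. True}"
    using lat_norm_char[OF ab v] unfolding N_def by auto
  define M where "M = {x. x / N \<in> zloc q}"
  have inM: "x \<in> M" if X: "x \<in> int_span (qnrd a b ` lat v)" for x
  proof -
    obtain n where "x = of_int n * N" using X[unfolded N(2)] by blast
    then show ?thesis unfolding M_def using N(1) q by simp
  qed
  have nv: "\<forall>i<4. qnrd a b (v i) \<in> M"
  proof (intro allI impI)
    fix i :: nat assume "i < 4"
    then have "qnrd a b (v i) \<in> qnrd a b ` lat v" using lat_basis by blast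
    then show "qnrd a b (v i) \<in> M" using inM int_span_base by blast
  qed
  have bv: "\<forall>i<4. \<forall>j<4. qbil a b (v i) (v j) \<in> M"
  proof (intro allI impI)
    fix i j :: nat assume ij: "i < 4" "j < 4"
    have "v i + v j \<in> lat v" using ij lat_add lat_basis by blast
    then have s1: "qnrd a b (v i + v j) \<in> int_span (qnrd a b ` lat v)" by (intro int_span_base imageI)
    have "v i \<in> lat v" "v j \<in> lat v" using ij lat_basis by blast+
    then have s2: "qnrd a b (v i) \<in> int_span (qnrd a b ` lat v)" "qnrd a b (v j) \<in> int_span (qnrd a b ` lat v)"
      by (auto intro: int_span_base)
    have s3: "- qnrd a b (v i) \<in> int_span (qnrd a b ` lat v)"
      "- qnrd a b (v j) \<in> int_span (qnrd a b ` lat v)"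
      using int_span_mult[OF s2(1), of "-1"] int_span_mult[OF s2(2), of "-1"] by simp_all
    have "qnrd a b (v i + v j) + - qnrd a b (v i) + - qnrd a b (v j)
        \<in> int_span (qnrd a b ` lat v)"
      using s1 s3 int_span_add by blast
    then have "qbil a b (v i) (v j) \<in> int_span (qnrd a b ` lat v)" unfolding qbil_as_nrd by simp
    then show "qbil a b (v i) (v j) \<in> M" using inM by blast
  qed
  obtain c where c: "\<forall>i<4. c i \<in> zloc q" "w = (\<Sum>i<4. qscale (c i) (v i))" using w unfolding lsp_mem by blast
  have "qnrd a b (\<Sum>i<4. qscale (c i) (v i)) \<in> M"
  proof (rule nrd_expand_closed[where R = "zloc q"])
    show "0 \<in> M" unfolding M_def using q by simp
    show "x + y \<in> M" if "x \<in> M" "y \<in> M" for x y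
      using that zloc_add[OF q] unfolding M_def by (simp add: add_divide_distrib)
    show "r * x \<in> M" if "r \<in> zloc q" "x \<in> M" for r x
    proof -
      have "r * (x / N) \<in> zloc q" using that zloc_mult[OF q] unfolding M_def by blast
      then show ?thesis unfolding M_def by simp
    qed
    show "r * s \<in> zloc q" if "r \<in> zloc q" "s \<in> zloc q" for r s using that zloc_mult[OF q] by blast
    show "\<forall>i<4. c i \<in> zloc q" using c(1) .
    show "\<forall>i<4. qnrd a b (v i) \<in> M" using nv .
    show "\<forall>i<4. \<forall>j<4. qbil a b (v i) (v j) \<in> M" using bv .
  qed
  then show ?thesis using c unfolding M_def N_def by simp
qed

lemma norm_loc_lower:
  assumes ab: "a < 0" "b < 0" and v: "indep4 v" and q: "prime q"
  shows "\<exists>w\<in>lat v. qnrd a b w \<noteq> 0 \<and> lat_norm a b (lat v) / qnrd a b w \<in> zloc q"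
proof (rule ccontr)
  assume contra: "\<not> ?thesis"
  define N where "N = lat_norm a b (lat v)"
  have N: "N > 0" "int_span (qnrd a b ` lat v) = {of_int n * N | n. True}"
    using lat_norm_char[OF ab v] unfolding N_def by auto
  have "N = of_int 1 * N" by simp
  then have "N \<in> int_span (qnrd a b ` lat v)" unfolding N(2) by blast
  then obtain F c where F: "finite F" "F \<subseteq> qnrd a b ` lat v" "N = (\<Sum>r\<in>F. of_int (c r) * r)"
    unfolding int_span_mem by blast
  have qN: "of_nat q * N \<noteq> 0" using N(1) q prime_gt_0_nat by simp
  have each: "r / (of_nat q * N) \<in> zloc q" if R: "r \<in> F" for r
  proof (cases "r = 0")
    case False
    obtain w where w: "w \<in> lat v" "r = qnrd a b w" using R F(2) by blast
    have "\<not> N / r \<in> zloc q" using contra w False unfolding N_def by blast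
    then have "vq q (N / r) < 0" using zloc_iff_vq[OF q] by simp
    then have "vq q N - vq q r < 0" using False N(1) q by (simp add: vq_divide)
    then have "vq q (r / (of_nat q * N)) \<ge> 0"
      using False N(1) q qN by (simp add: vq_divide vq_mult vq_self prime_gt_0_nat)
    then show ?thesis using zloc_iff_vq[OF q] by simp
  qed (simp add: q)
  have "N / (of_nat q * N) = (\<Sum>r\<in>F. of_int (c r) * (r / (of_nat q * N)))"
    unfolding F(3) by (simp add: sum_divide_distrib)
  also have "\<dots> \<in> zloc q" using each q by (intro zloc_sum zloc_mult) auto
  finally have "1 / of_nat q \<in> zloc q" using N(1) by simp
  moreover have "vq q (1 / of_nat q) = -1" using q vq_self[OF q] prime_gt_0_nat[OF q]
    by (simp add: vq_divide)
  ultimately show False using zloc_iff_vq[OF q] prime_gt_0_nat[OF q] by simp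
qed

primrec qpw :: "rat \<Rightarrow> rat \<Rightarrow> quat \<Rightarrow> nat \<Rightarrow> quat" where
  "qpw a b x 0 = qone"
| "qpw a b x (Suc n) = qmul a b x (qpw a b x n)"

lemma qpw_nrd: "qnrd a b (qpw a b x n) = qnrd a b x ^ n"
  by (induct n) (simp_all add: qnrd_mult)

lemma qpw_rec: "qpw a b x (Suc (Suc n)) = qscale (2 * q0 x) (qpw a b x (Suc n)) - qscale (qnrd a b x) (qpw a b x n)"
proof -
  have "qpw a b x (Suc (Suc n)) = qmul a b (qmul a b x x) (qpw a b x n)" by (simp add: qmul_assoc)
  also have "\<dots> = qscale (2 * q0 x) (qpw a b x (Suc n)) - qscale (qnrd a b x) (qpw a b x n)"
    unfolding qsquare by (simp add: qmul_diff_left qmul_scale_left)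
  finally show ?thesis .
qed

lemma vq_large_neg:
  assumes q: "prime q" and C: "C \<noteq> 0" and r: "r \<noteq> 0" "vq q r < 0"
  obtains k where "vq q C + int k * vq q r < 0"
proof -
  define k where "k = nat \<bar>vq q C\<bar> + 1"
  have "int k * vq q r \<le> int k * (-1)" using r(2) by (intro mult_left_mono) auto
  moreover have "int k = \<bar>vq q C\<bar> + 1" unfolding k_def by simp
  ultimately have "vq q C + int k * vq q r < 0" by linarith
  then show ?thesis using that by blast
qed

lemma zloc_from_powers:
  assumes q: "prime q" and C: "C \<noteq> 0" and h: "\<And>k. C * r ^ k \<in> zloc q"
  shows "r \<in> zloc q"
proof (rule ccontr)
  assume "r \<notin> zloc q"
  then have r: "r \<noteq> 0" "vq q r < 0" using zloc_iff_vq[OF q] by auto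
  obtain k where k: "vq q C + int k * vq q r < 0" using vq_large_neg[OF q C r] by blast
  have "vq q (C * r ^ k) = vq q C + int k * vq q r" using q C r by (simp add: vq_mult vq_power)
  moreover have "C * r ^ k \<noteq> 0" using C r by simp
  ultimately show False using h[of k] k zloc_iff_vq[OF q] by simp
qed

lemma den_clear: "of_int (snd (quotient_of r)) * r \<in> \<int>"
proof -
  obtain u w where qo: "quotient_of r = (u, w)" by (cases "quotient_of r")
  have "r = of_int u / of_int w" "w > 0" using quotient_of_div[OF qo] quotient_of_denom_pos[OF qo] by auto
  then have "of_int w * r = of_int u" by simp
  then show ?thesis using qo by simp
qed

lemma zloc_poly_aux:
  assumes q: "prime q" and "e \<in> zloc q" "A \<in> zloc q" "B \<in> zloc q" "x0 \<in> zloc q" "x1 \<in> zloc q" "x2 \<in> zloc q" "x3 \<in> zloc q"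
  shows "e * e * x0 * x0 - e * A * x1 * x1 - e * B * x2 * x2 + A * B * x3 * x3 \<in> zloc q"
  using assms by (simp add: zloc_add zloc_diff zloc_mult)

locale qorder =
  fixes a b :: rat and vo :: "nat \<Rightarrow> quat"
  assumes a_neg: "a < 0" and b_neg: "b < 0" and ind: "indep4 vo"
    and one_in: "qone \<in> lat vo" and mul_closed: "\<And>x y. x \<in> lat vo \<Longrightarrow> y \<in> lat vo \<Longrightarrow> qmul a b x y \<in> lat vo"
begin

lemma lsp_mul:
  assumes q: "prime q" and x: "x \<in> lsp q vo" and y: "y \<in> lsp q vo"
  shows "qmul a b x y \<in> lsp q vo"
proof -
  obtain c where c: "\<forall>i<4. c i \<in> zloc q" "x = (\<Sum>i<4. qscale (c i) (vo i))" using x unfolding lsp_mem by blast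
  obtain d where d: "\<forall>i<4. d i \<in> zloc q" "y = (\<Sum>i<4. qscale (d i) (vo i))" using y unfolding lsp_mem by blast
  have "qmul a b x y = (\<Sum>i<4. qscale (c i) (qmul a b (vo i) y))"
    unfolding c(2) by (simp add: qmul_sum_left qmul_scale_left)
  also have "\<dots> = (\<Sum>i<4. \<Sum>j<4. qscale (c i * d j) (qmul a b (vo i) (vo j)))"
    unfolding d(2) by (simp add: qmul_sum_right qmul_scale_right qscale_sum_right)
  also have "\<dots> \<in> lsp q vo"
  proof (intro lsp_sum[OF q] lsp_scale[OF q] lat_lsp[OF q])
    fix i j :: nat assume "i \<in> {..<4}" "j \<in> {..<4}"
    then show "c i * d j \<in> zloc q" "qmul a b (vo i) (vo j) \<in> lat vo"
      using c(1) d(1) zloc_mult[OF q] mul_closed lat_basis by auto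
  qed
  finally show ?thesis .
qed

lemma one_lsp: "prime q \<Longrightarrow> qone \<in> lsp q vo"
  using lat_lsp one_in by blast

lemma qpw_lsp: "prime q \<Longrightarrow> x \<in> lsp q vo \<Longrightarrow> qpw a b x n \<in> lsp q vo"
  by (induct n) (simp_all add: one_lsp lsp_mul)

lemma bounded_denoms:
  obtains D :: int where "D > 0"
    "\<And>q w. prime q \<Longrightarrow> w \<in> lsp q vo \<Longrightarrow>
       of_int D * q0 w \<in> zloc q \<and> of_int D * q1 w \<in> zloc q \<and> of_int D * q2 w \<in> zloc q \<and> of_int D * q3 w \<in> zloc q"
proof -
  obtain D0 :: int where D0: "D0 > 0" "\<forall>k<4. of_int D0 * q0 (vo k) \<in> \<int>"
    using clear_denoms[of 4 "\<lambda>k. q0 (vo k)"] by blast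
  obtain D1 :: int where D1: "D1 > 0" "\<forall>k<4. of_int D1 * q1 (vo k) \<in> \<int>"
    using clear_denoms[of 4 "\<lambda>k. q1 (vo k)"] by blast
  obtain D2 :: int where D2: "D2 > 0" "\<forall>k<4. of_int D2 * q2 (vo k) \<in> \<int>"
    using clear_denoms[of 4 "\<lambda>k. q2 (vo k)"] by blast
  obtain D3 :: int where D3: "D3 > 0" "\<forall>k<4. of_int D3 * q3 (vo k) \<in> \<int>"
    using clear_denoms[of 4 "\<lambda>k. q3 (vo k)"] by blast
  define D where "D = D0 * D1 * D2 * D3"
  have Dpos: "D > 0" unfolding D_def using D0 D1 D2 D3 by simp
  have Dv: "of_int D * q0 (vo i) \<in> \<int> \<and> of_int D * q1 (vo i) \<in> \<int> \<and> of_int D * q2 (vo i) \<in> \<int> \<and> of_int D * q3 (vo i) \<in> \<int>"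
    if "i < 4" for i
  proof -
    have "of_int D * q0 (vo i) = of_int (D1 * D2 * D3) * (of_int D0 * q0 (vo i))"
      "of_int D * q1 (vo i) = of_int (D0 * D2 * D3) * (of_int D1 * q1 (vo i))"
      "of_int D * q2 (vo i) = of_int (D0 * D1 * D3) * (of_int D2 * q2 (vo i))"
      "of_int D * q3 (vo i) = of_int (D0 * D1 * D2) * (of_int D3 * q3 (vo i))"
      unfolding D_def by (simp_all add: mult_ac)
    then show ?thesis using that D0(2) D1(2) D2(2) D3(2) Ints_mult Ints_of_int by metis
  qed
  have "of_int D * q0 w \<in> zloc q \<and> of_int D * q1 w \<in> zloc q \<and> of_int D * q2 w \<in> zloc q \<and> of_int D * q3 w \<in> zloc q"
    if q: "prime q" and w: "w \<in> lsp q vo" for q w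
  proof -
    obtain c where c: "\<forall>i<4. c i \<in> zloc q" "w = (\<Sum>i<4. qscale (c i) (vo i))" using w unfolding lsp_mem by blast
    have I: "r \<in> \<int> \<Longrightarrow> r \<in> zloc q" for r using q by (auto elim!: Ints_cases)
    have "of_int D * q0 w = (\<Sum>i<4. c i * (of_int D * q0 (vo i)))"
      "of_int D * q1 w = (\<Sum>i<4. c i * (of_int D * q1 (vo i)))"
      "of_int D * q2 w = (\<Sum>i<4. c i * (of_int D * q2 (vo i)))"
      "of_int D * q3 w = (\<Sum>i<4. c i * (of_int D * q3 (vo i)))"
      unfolding c(2) by (simp_all add: sum_distrib_left mult_ac)
    moreover have "(\<Sum>i<4. c i * (of_int D * q0 (vo i))) \<in> zloc q"
      "(\<Sum>i<4. c i * (of_int D * q1 (vo i))) \<in> zloc q"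
      "(\<Sum>i<4. c i * (of_int D * q2 (vo i))) \<in> zloc q"
      "(\<Sum>i<4. c i * (of_int D * q3 (vo i))) \<in> zloc q"
    proof -
      have T: "c i * (of_int D * q0 (vo i)) \<in> zloc q \<and> c i * (of_int D * q1 (vo i)) \<in> zloc q \<and>
          c i * (of_int D * q2 (vo i)) \<in> zloc q \<and> c i * (of_int D * q3 (vo i)) \<in> zloc q" if i: "i < 4" for i
      proof -
        have "c i \<in> zloc q" using c(1) i by blast
        moreover have "of_int D * q0 (vo i) \<in> zloc q" "of_int D * q1 (vo i) \<in> zloc q"
          "of_int D * q2 (vo i) \<in> zloc q" "of_int D * q3 (vo i) \<in> zloc q" using Dv[OF i] I by auto
        ultimately show ?thesis using zloc_mult[OF q] by blast
      qed
      show "(\<Sum>i<4. c i * (of_int D * q0 (vo i))) \<in> zloc q" using T by (intro zloc_sum[OF q]) auto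
      show "(\<Sum>i<4. c i * (of_int D * q1 (vo i))) \<in> zloc q" using T by (intro zloc_sum[OF q]) auto
      show "(\<Sum>i<4. c i * (of_int D * q2 (vo i))) \<in> zloc q" using T by (intro zloc_sum[OF q]) auto
      show "(\<Sum>i<4. c i * (of_int D * q3 (vo i))) \<in> zloc q" using T by (intro zloc_sum[OF q]) auto
    qed
    ultimately show ?thesis by simp
  qed
  then show ?thesis using that Dpos by blast
qed

lemma nrd_integral:
  assumes q: "prime q" and o: "x \<in> lsp q vo"
  shows "qnrd a b x \<in> zloc q"
proof -
  obtain D :: int where D: "D > 0"
    "\<And>q w. prime q \<Longrightarrow> w \<in> lsp q vo \<Longrightarrow>
       of_int D * q0 w \<in> zloc q \<and> of_int D * q1 w \<in> zloc q \<and> of_int D * q2 w \<in> zloc q \<and> of_int D * q3 w \<in> zloc q"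
    by (rule bounded_denoms) blast
  define E where "E = snd (quotient_of a) * snd (quotient_of b)"
  have E: "E > 0" unfolding E_def using quotient_of_denom_pos' by simp
  have "of_int E * a = of_int (snd (quotient_of b)) * (of_int (snd (quotient_of a)) * a)"
    "of_int E * b = of_int (snd (quotient_of a)) * (of_int (snd (quotient_of b)) * b)"
    unfolding E_def by (simp_all add: mult_ac)
  then have "of_int E * a \<in> \<int>" "of_int E * b \<in> \<int>" using den_clear Ints_mult Ints_of_int by metis+
  then have Ea: "of_int E * a \<in> zloc q" and Eb: "of_int E * b \<in> zloc q"
    using q by (auto elim!: Ints_cases)
  define C :: rat where "C = of_int E * of_int E * (of_int D * of_int D)"
  have C0: "C \<noteq> 0" unfolding C_def using D(1) E by simp
  have Cw: "C * qnrd a b w \<in> zloc q" if w: "w \<in> lsp q vo" for w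
  proof -
    have d: "of_int D * q0 w \<in> zloc q" "of_int D * q1 w \<in> zloc q" "of_int D * q2 w \<in> zloc q" "of_int D * q3 w \<in> zloc q"
      using D(2)[OF q w] by auto
    have "C * qnrd a b w = of_int E * of_int E * (of_int D * q0 w) * (of_int D * q0 w)
       - of_int E * (of_int E * a) * (of_int D * q1 w) * (of_int D * q1 w)
       - of_int E * (of_int E * b) * (of_int D * q2 w) * (of_int D * q2 w)
       + (of_int E * a) * (of_int E * b) * (of_int D * q3 w) * (of_int D * q3 w)"
      unfolding C_def qnrd_def by (simp add: power2_eq_square algebra_simps)
    also have "\<dots> \<in> zloc q"
      by (rule zloc_poly_aux[OF q _ Ea Eb d]) (simp add: q)
    finally show ?thesis .
  qed
  have "C * qnrd a b x ^ k \<in> zloc q" for k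
  proof -
    have "C * qnrd a b (qpw a b x k) \<in> zloc q" using Cw[OF qpw_lsp[OF q o, of k]] .
    then show ?thesis by (simp only: qpw_nrd)
  qed
  then show ?thesis by (rule zloc_from_powers[OF q C0])
qed

lemma trd_integral:
  assumes q: "prime q" and o: "x \<in> lsp q vo"
  shows "2 * q0 x \<in> zloc q"
proof (rule ccontr)
  assume nt: "2 * q0 x \<notin> zloc q"
  define t where "t = 2 * q0 x"
  define n where "n = qnrd a b x"
  have t: "t \<noteq> 0" "vq q t < 0" using nt zloc_iff_vq[OF q] unfolding t_def by auto
  have n: "n \<in> zloc q" unfolding n_def using nrd_integral[OF q o] .
  define p where "p = (\<lambda>k. 2 * q0 (qpw a b x k))"
  have p0: "p 0 = 2" unfolding p_def by simp
  have p1: "p 1 = t" unfolding p_def t_def by simp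
  have prec: "p (Suc (Suc k)) = t * p (Suc k) - n * p k" for k
    unfolding p_def t_def n_def qpw_rec by (simp add: algebra_simps)
  have small: "y = 0 \<or> vq q (t * p (Suc k)) < vq q y" if "y = 0 \<or> vq q y \<ge> vq q t * int k" "p (Suc k) \<noteq> 0"
      "vq q (p (Suc k)) = int (Suc k) * vq q t" for y k
  proof (cases "y = 0")
    case False
    have "vq q (t * p (Suc k)) = vq q t + int (Suc k) * vq q t" using t that q by (simp add: vq_mult)
    also have "\<dots> < vq q t * int k" using t(2) by (simp add: algebra_simps)
    finally show ?thesis using that(1) by auto
  qed simp
  have main: "p (Suc k) \<noteq> 0 \<and> vq q (p (Suc k)) = int (Suc k) * vq q t \<and>
      p (Suc (Suc k)) \<noteq> 0 \<and> vq q (p (Suc (Suc k))) = int (Suc (Suc k)) * vq q t" for k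
  proof (induct k)
    case 0
    have y: "- n * p 0 = 0 \<or> vq q (- n * p 0) \<ge> vq q t * int 0"
    proof (cases "n = 0")
      case False
      have "vq q n \<ge> 0" using n False zloc_iff_vq[OF q] by auto
      moreover have "vq q (2::rat) \<ge> 0" using zloc_iff_vq[OF q, of 2] q by simp
      ultimately show ?thesis using False q p0 by (simp add: vq_mult)
    qed simp
    have eq: "p 2 = t * p 1 + (- n * p 0)" using prec[of 0] by (simp add: numeral_2_eq_2)
    have "t * p 1 \<noteq> 0" using t p1 by simp
    then have "vq q (t * p 1 + (- n * p 0)) = vq q (t * p 1)" "t * p 1 + (- n * p 0) \<noteq> 0"
      using vq_add_strict[OF q, of "t * p 1" "- n * p 0"] small[of "- n * p 0" 0] y t p1 by simp_all
    then show ?case using p1 t q eq by (simp add: vq_mult numeral_2_eq_2)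
  next
    case (Suc k)
    have y: "- n * p (Suc k) = 0 \<or> vq q (- n * p (Suc k)) \<ge> vq q t * int (Suc k)"
    proof (cases "n = 0")
      case False
      have "vq q n \<ge> 0" using n False zloc_iff_vq[OF q] by auto
      then show ?thesis using False q Suc by (simp add: vq_mult algebra_simps)
    qed simp
    have eq: "p (Suc (Suc (Suc k))) = t * p (Suc (Suc k)) + (- n * p (Suc k))" using prec[of "Suc k"] by simp
    have "t * p (Suc (Suc k)) \<noteq> 0" using t Suc by simp
    moreover have "- n * p (Suc k) = 0 \<or> vq q (t * p (Suc (Suc k))) < vq q (- n * p (Suc k))"
      using small[of "- n * p (Suc k)" "Suc k"] y Suc by simp
    ultimately have "vq q (t * p (Suc (Suc k)) + (- n * p (Suc k))) = vq q (t * p (Suc (Suc k)))"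
      "t * p (Suc (Suc k)) + (- n * p (Suc k)) \<noteq> 0"
      using vq_add_strict[OF q, of "t * p (Suc (Suc k))" "- n * p (Suc k)"] by simp_all
    then have A: "vq q (p (Suc (Suc (Suc k)))) = vq q (t * p (Suc (Suc k)))" "p (Suc (Suc (Suc k))) \<noteq> 0"
      unfolding eq by simp_all
    have B: "vq q (t * p (Suc (Suc k))) = vq q t + vq q (p (Suc (Suc k)))" using vq_mult[OF q] t Suc by simp
    have C: "vq q (p (Suc (Suc k))) = int (Suc (Suc k)) * vq q t" using Suc by simp
    have "vq q (p (Suc (Suc (Suc k)))) = int (Suc (Suc (Suc k))) * vq q t"
      unfolding A(1) B C by (simp only: of_nat_Suc distrib_right)
    then show ?case using A(2) Suc by simp
  qed
  obtain D :: int where D: "D > 0"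
    "\<And>q w. prime q \<Longrightarrow> w \<in> lsp q vo \<Longrightarrow>
       of_int D * q0 w \<in> zloc q \<and> of_int D * q1 w \<in> zloc q \<and> of_int D * q2 w \<in> zloc q \<and> of_int D * q3 w \<in> zloc q"
    by (rule bounded_denoms) blast
  have D2: "of_int D * p k \<in> zloc q" for k
  proof -
    have "of_int D * q0 (qpw a b x k) \<in> zloc q" using D(2)[OF q qpw_lsp[OF q o]] by blast
    then have "2 * (of_int D * q0 (qpw a b x k)) \<in> zloc q" using zloc_mult[OF q, of 2] q by simp
    then show ?thesis unfolding p_def by (simp add: mult_ac)
  qed
  have vD: "vq q (of_int D) \<ge> 0" using D(1) q by (simp add: vq_int)
  define k where "k = nat (vq q (of_int D))"
  have pk: "p (Suc k) \<noteq> 0" "vq q (p (Suc k)) = int (Suc k) * vq q t" using main[of k] by auto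
  have "vq q (of_int D * p (Suc k)) = vq q (of_int D) + int (Suc k) * vq q t"
    using pk D(1) q by (simp add: vq_mult)
  also have "\<dots> \<le> vq q (of_int D) - int (Suc k)"
  proof -
    have "int (Suc k) * vq q t \<le> int (Suc k) * (-1)" using t(2) by (intro mult_left_mono) auto
    then show ?thesis by simp
  qed
  also have "\<dots> < 0" unfolding k_def using vD by simp
  finally have "vq q (of_int D * p (Suc k)) < 0" .
  moreover have "of_int D * p (Suc k) \<noteq> 0" using pk D(1) by simp
  ultimately show False using D2[of "Suc k"] zloc_iff_vq[OF q] by simp
qed

lemma conj_lsp:
  assumes q: "prime q" and o: "x \<in> lsp q vo"
  shows "qconj x \<in> lsp q vo"
  unfolding qconj_eq using trd_integral[OF q o] o one_lsp[OF q]
  by (intro lsp_diff[OF q] lsp_scale[OF q])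

lemma nrd_int: "x \<in> lat vo \<Longrightarrow> qnrd a b x \<in> \<int>"
  using nrd_integral lat_lsp zloc_all_int by blast

lemma trd_int: "x \<in> lat vo \<Longrightarrow> 2 * q0 x \<in> \<int>"
  using trd_integral lat_lsp zloc_all_int by blast

lemma conj_lat: assumes "x \<in> lat vo" shows "qconj x \<in> lat vo"
proof -
  obtain t where "2 * q0 x = of_int t" using trd_int[OF assms] by (elim Ints_cases)
  then have "qconj x = qscale (of_int t) qone - x" unfolding qconj_eq by simp
  then show ?thesis using lat_diff lat_scale_int one_in assms by metis
qed

end

definition agrp :: "quat set \<Rightarrow> bool" where
  "agrp S \<longleftrightarrow> 0 \<in> S \<and> (\<forall>x\<in>S. \<forall>y\<in>S. x + y \<in> S) \<and> (\<forall>x\<in>S. - x \<in> S)"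

definition cst :: "quat set \<Rightarrow> quat \<Rightarrow> quat set" where
  "cst B x = {x + y | y. y \<in> B}"

lemma lat_index_cst: "lat_index A B = card (cst B ` A)"
  unfolding lat_index_def cst_def by simp

lemma agrp_diff: "agrp S \<Longrightarrow> x \<in> S \<Longrightarrow> y \<in> S \<Longrightarrow> x - y \<in> S"
  unfolding agrp_def by (metis diff_conv_add_uminus)

lemma agrp_lat: "agrp (lat v)"
  unfolding agrp_def using lat_zero lat_add lat_minus by blast

lemma cst_eq_iff:
  assumes M: "agrp M"
  shows "cst M x = cst M y \<longleftrightarrow> x - y \<in> M"
proof
  assume eq: "cst M x = cst M y"
  have "x \<in> cst M x" unfolding cst_def using M unfolding agrp_def by force
  then have "x \<in> cst M y" using eq by simp
  then obtain m where "m \<in> M" "x = y + m" unfolding cst_def by blast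
  then show "x - y \<in> M" by simp
next
  assume d: "x - y \<in> M"
  show "cst M x = cst M y"
  proof
    show "cst M x \<subseteq> cst M y"
    proof
      fix z assume "z \<in> cst M x"
      then obtain m where m: "m \<in> M" "z = x + m" unfolding cst_def by blast
      then have "(x - y) + m \<in> M" using d M unfolding agrp_def by blast
      moreover have "z = y + ((x - y) + m)" using m by simp
      ultimately show "z \<in> cst M y" unfolding cst_def by blast
    qed
    show "cst M y \<subseteq> cst M x"
    proof
      fix z assume "z \<in> cst M y"
      then obtain m where m: "m \<in> M" "z = y + m" unfolding cst_def by blast
      have "- (x - y) \<in> M" using d M unfolding agrp_def by blast
      then have "- (x - y) + m \<in> M" using m M unfolding agrp_def by blast
      moreover have "z = x + (- (x - y) + m)" using m by simp
      ultimately show "z \<in> cst M x" unfolding cst_def by blast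
    qed
  qed
qed

lemma cst_translate: "cst K (x0 + m) = (\<lambda>z. x0 + z) ` cst K m"
  unfolding cst_def by (auto simp: add.assoc image_iff)

lemma idx_chain:
  assumes K: "agrp K" and M: "agrp M" and L: "agrp L" and KM: "K \<subseteq> M" and MsubL: "M \<subseteq> L"
    and fin: "finite (cst K ` L)"
  shows "lat_index L K = lat_index L M * lat_index M K"
proof -
  define F where "F = (\<lambda>C. {cst K x | x. x \<in> L \<and> cst M x = C})"
  have U: "cst K ` L = (\<Union>C\<in>cst M ` L. F C)" unfolding F_def by blast
  have finM: "finite (cst M ` L)"
  proof -
    have "cst M ` L = (\<lambda>S. cst M (SOME x. x \<in> L \<and> cst K x = S)) ` (cst K ` L)"
    proof
      show "cst M ` L \<subseteq> (\<lambda>S. cst M (SOME x. x \<in> L \<and> cst K x = S)) ` (cst K ` L)"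
      proof
        fix C assume "C \<in> cst M ` L"
        then obtain x where x: "x \<in> L" "C = cst M x" by blast
        define y where "y = (SOME y. y \<in> L \<and> cst K y = cst K x)"
        have y: "y \<in> L" "cst K y = cst K x" unfolding y_def using someI[of "\<lambda>y. y \<in> L \<and> cst K y = cst K x" x] x by auto
        then have "y - x \<in> K" using cst_eq_iff[OF K] by blast
        then have "cst M y = cst M x" using cst_eq_iff[OF M] KM by blast
        then show "C \<in> (\<lambda>S. cst M (SOME x. x \<in> L \<and> cst K x = S)) ` (cst K ` L)"
          using x unfolding y_def by blast
      qed
      show "(\<lambda>S. cst M (SOME x. x \<in> L \<and> cst K x = S)) ` (cst K ` L) \<subseteq> cst M ` L"
      proof
        fix C assume "C \<in> (\<lambda>S. cst M (SOME x. x \<in> L \<and> cst K x = S)) ` (cst K ` L)"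
        then obtain x where x: "x \<in> L" "C = cst M (SOME y. y \<in> L \<and> cst K y = cst K x)" by blast
        have "(SOME y. y \<in> L \<and> cst K y = cst K x) \<in> L" using someI[of "\<lambda>y. y \<in> L \<and> cst K y = cst K x" x] x by auto
        then show "C \<in> cst M ` L" using x by blast
      qed
    qed
    then show ?thesis using fin by simp
  qed
  have Fcard: "card (F C) = lat_index M K" if C: "C \<in> cst M ` L" for C
  proof -
    obtain x0 where x0: "x0 \<in> L" "C = cst M x0" using C by blast
    have "F C = (\<lambda>S. (\<lambda>z. x0 + z) ` S) ` (cst K ` M)"
    proof
      show "F C \<subseteq> (\<lambda>S. (\<lambda>z. x0 + z) ` S) ` (cst K ` M)"
      proof
        fix S assume "S \<in> F C"
        then obtain x where x: "x \<in> L" "cst M x = cst M x0" "S = cst K x" unfolding F_def x0(2) by blast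
        then have m: "x - x0 \<in> M" using cst_eq_iff[OF M] by blast
        have "S = cst K (x0 + (x - x0))" using x by simp
        also have "\<dots> = (\<lambda>z. x0 + z) ` cst K (x - x0)" by (rule cst_translate)
        finally show "S \<in> (\<lambda>S. (\<lambda>z. x0 + z) ` S) ` (cst K ` M)" using m by blast
      qed
      show "(\<lambda>S. (\<lambda>z. x0 + z) ` S) ` (cst K ` M) \<subseteq> F C"
      proof
        fix S assume "S \<in> (\<lambda>S. (\<lambda>z. x0 + z) ` S) ` (cst K ` M)"
        then obtain m where m: "m \<in> M" "S = (\<lambda>z. x0 + z) ` cst K m" by blast
        then have S: "S = cst K (x0 + m)" using cst_translate by simp
        have "x0 + m \<in> L" using x0(1) m(1) MsubL L unfolding agrp_def by blast
        moreover have "cst M (x0 + m) = cst M x0" using m(1) cst_eq_iff[OF M] by simp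
        ultimately show "S \<in> F C" unfolding F_def x0(2) S by blast
      qed
    qed
    moreover have "inj_on (\<lambda>S. (\<lambda>z. x0 + z) ` S) (cst K ` M)"
      by (rule inj_onI) (metis (no_types, lifting) add_left_cancel inj_onI inj_image_eq_iff)
    ultimately show ?thesis unfolding lat_index_cst by (simp add: card_image)
  qed
  have disj: "F C \<inter> F C' = {}" if "C \<in> cst M ` L" "C' \<in> cst M ` L" "C \<noteq> C'" for C C'
  proof (rule ccontr)
    assume "F C \<inter> F C' \<noteq> {}"
    then obtain x y where xy: "cst M x = C" "cst M y = C'" "cst K x = cst K y" unfolding F_def by blast
    then have "x - y \<in> M" using cst_eq_iff[OF K] KM by blast
    then show False using xy that(3) cst_eq_iff[OF M] by blast
  qed
  have finF: "finite (F C)" for C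
    using fin unfolding F_def by (rule finite_subset[rotated]) blast
  have "lat_index L K = card (\<Union>C\<in>cst M ` L. F C)" unfolding lat_index_cst U ..
  also have "\<dots> = (\<Sum>C\<in>cst M ` L. card (F C))"
    by (rule card_UN_disjoint[OF finM]) (use finF disj in auto)
  also have "\<dots> = (\<Sum>C\<in>cst M ` L. lat_index M K)" using Fcard by simp
  also have "\<dots> = lat_index L M * lat_index M K" unfolding lat_index_cst by simp
  finally show ?thesis .
qed

lemma idx_iso:
  assumes add: "\<And>x y. f (x + y) = f x + f y" and inj: "inj f"
  shows "lat_index (f ` L) (f ` M) = lat_index L M"
proof -
  have im: "cst (f ` M) (f x) = f ` cst M x" for x
  proof
    show "cst (f ` M) (f x) \<subseteq> f ` cst M x"
    proof
      fix z assume "z \<in> cst (f ` M) (f x)"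
      then obtain m where "m \<in> M" "z = f x + f m" unfolding cst_def by blast
      then have "z = f (x + m)" "x + m \<in> cst M x" using add unfolding cst_def by auto
      then show "z \<in> f ` cst M x" by blast
    qed
    show "f ` cst M x \<subseteq> cst (f ` M) (f x)"
    proof
      fix z assume "z \<in> f ` cst M x"
      then obtain m where "m \<in> M" "z = f (x + m)" unfolding cst_def by blast
      then have "z = f x + f m" using add by simp
      then show "z \<in> cst (f ` M) (f x)" using \<open>m \<in> M\<close> unfolding cst_def by blast
    qed
  qed
  have "cst (f ` M) ` (f ` L) = (\<lambda>S. f ` S) ` (cst M ` L)"
    using im by (auto simp: image_iff)
  moreover have "inj_on (\<lambda>S. f ` S) (cst M ` L)"
    using inj by (auto intro!: inj_onI simp: inj_image_eq_iff)
  ultimately show ?thesis unfolding lat_index_cst by (simp add: card_image)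
qed

lemma scale_lat: "qscale r ` lat v = lat (qscale r \<circ> v)"
  using qlinear_lat[OF qlinear_scale] .

lemma idx_scale:
  assumes v: "indep4 v" and s: "s > 0"
  shows "lat_index (lat v) (qscale (of_nat s) ` lat v) = s ^ 4"
proof -
  define M where "M = qscale (of_nat s) ` lat v"
  have Mlat: "M = lat (qscale (of_nat s) \<circ> v)" unfolding M_def by (rule scale_lat)
  have MG: "agrp M" unfolding Mlat by (rule agrp_lat)
  define R where "R = PiE {..<4::nat} (\<lambda>_. {0..<int s})"
  define \<rho> where "\<rho> = (\<lambda>r::nat \<Rightarrow> int. \<Sum>i<4. qscale (of_int (r i)) (v i))"
  have cardR: "card R = s ^ 4" unfolding R_def by (simp add: card_PiE)
  have memM: "x \<in> M \<longleftrightarrow> (\<exists>m. x = (\<Sum>i<4. qscale (of_int (int s * m i)) (v i)))" for x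
  proof -
    have "x \<in> M \<longleftrightarrow> (\<exists>m. x = (\<Sum>i<4. qscale (of_int (m i)) (qscale (of_nat s) (v i))))"
      unfolding Mlat lat_mem by simp
    also have "\<dots> \<longleftrightarrow> (\<exists>m. x = (\<Sum>i<4. qscale (of_int (int s * m i)) (v i)))"
      by (simp add: mult.commute)
    finally show ?thesis .
  qed
  have eq: "cst M ` lat v = (\<lambda>r. cst M (\<rho> r)) ` R"
  proof
    show "cst M ` lat v \<subseteq> (\<lambda>r. cst M (\<rho> r)) ` R"
    proof
      fix C assume "C \<in> cst M ` lat v"
      then obtain x where x: "x \<in> lat v" "C = cst M x" by blast
      then obtain n where n: "x = (\<Sum>i<4. qscale (of_int (n i)) (v i))" unfolding lat_mem by blast
      define r where "r = restrict (\<lambda>i. n i mod int s) {..<4}"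
      have "n i mod int s \<in> {0..<int s}" for i using s by simp
      then have rR: "r \<in> R" unfolding R_def r_def by (simp add: restrict_PiE_iff)
      have "x - \<rho> r = (\<Sum>i<4. qscale (of_int (n i) - of_int (r i)) (v i))"
        unfolding n \<rho>_def sum4_combine ..
      also have "\<dots> = (\<Sum>i<4. qscale (of_int (int s * (n i div int s))) (v i))"
      proof (rule sum.cong)
        fix i assume "i \<in> {..<4::nat}"
        then have "r i = n i mod int s" by (simp add: r_def)
        then have "n i - r i = int s * (n i div int s)" by (simp add: minus_mod_eq_mult_div)
        then have "(of_int (n i) - of_int (r i) :: rat) = of_int (int s * (n i div int s))"
          by (simp only: of_int_diff[symmetric])
        then show "qscale (of_int (n i) - of_int (r i)) (v i) = qscale (of_int (int s * (n i div int s))) (v i)"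
          by simp
      qed simp
      finally have xr: "x - \<rho> r = (\<Sum>i<4. qscale (of_int (int s * (n i div int s))) (v i))" .
      have "x - \<rho> r \<in> M" unfolding memM by (rule exI[of _ "\<lambda>i. n i div int s"]) (simp only: xr)
      then have "C = cst M (\<rho> r)" using x cst_eq_iff[OF MG] by simp
      then show "C \<in> (\<lambda>r. cst M (\<rho> r)) ` R" using rR by blast
    qed
    show "(\<lambda>r. cst M (\<rho> r)) ` R \<subseteq> cst M ` lat v"
    proof
      fix C assume "C \<in> (\<lambda>r. cst M (\<rho> r)) ` R"
      then obtain r where r: "C = cst M (\<rho> r)" by blast
      have "\<rho> r \<in> lat v" unfolding lat_mem \<rho>_def by (intro exI[of _ r]) simp
      then show "C \<in> cst M ` lat v" using r by blast
    qed
  qed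
  have inj: "inj_on (\<lambda>r. cst M (\<rho> r)) R"
  proof (rule inj_onI)
    fix r r' assume r: "r \<in> R" "r' \<in> R" "cst M (\<rho> r) = cst M (\<rho> r')"
    then have "\<rho> r - \<rho> r' \<in> M" using cst_eq_iff[OF MG] by blast
    then obtain m where m: "\<rho> r - \<rho> r' = (\<Sum>i<4. qscale (of_int (int s * m i)) (v i))" unfolding memM by blast
    have "r i = r' i" if i: "i < 4" for i
    proof -
      have E: "(\<Sum>i<4. qscale (of_int (r i) - of_int (r' i)) (v i)) = (\<Sum>i<4. qscale (of_int (int s * m i)) (v i))"
        using m unfolding \<rho>_def sum4_combine .
      have "of_int (r i) - of_int (r' i) = (of_int (int s * m i) :: rat)"
        using indep4_unique[OF v E i] by simp
      then have d: "r i - r' i = int s * m i" by (simp only: of_int_diff[symmetric] of_int_eq_iff)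
      have b: "0 \<le> r i" "r i < int s" "0 \<le> r' i" "r' i < int s" using r(1,2) i unfolding R_def by (auto simp: PiE_iff)
      have "m i = 0"
      proof (rule ccontr)
        assume "m i \<noteq> 0"
        then have "\<bar>m i\<bar> \<ge> 1" by arith
        then have "int s * \<bar>m i\<bar> \<ge> int s * 1" by (intro mult_left_mono) auto
        then have "\<bar>int s * m i\<bar> \<ge> int s" by (simp add: abs_mult)
        then show False using d b by linarith
      qed
      then show ?thesis using d by simp
    qed
    then have H: "\<And>i. i \<in> {..<4} \<Longrightarrow> r i = r' i" by simp
    show "r = r'" using r(1,2) unfolding R_def by (rule PiE_ext) (rule H)
  qed
  have "lat_index (lat v) M = card ((\<lambda>r. cst M (\<rho> r)) ` R)" unfolding lat_index_cst eq ..
  also have "\<dots> = s ^ 4" using card_image[OF inj] cardR by simp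
  finally show ?thesis unfolding M_def .
qed

lemma idx_dvd:
  assumes v: "indep4 v" and t: "t > 0" and M: "agrp M" and tM: "qscale (of_nat t) ` lat v \<subseteq> M" and MsubL: "M \<subseteq> lat v"
  shows "lat_index (lat v) M * lat_index M (qscale (of_nat t) ` lat v) = t ^ 4"
proof -
  have K: "agrp (qscale (of_nat t) ` lat v)" unfolding scale_lat by (rule agrp_lat)
  have c: "card (cst (qscale (of_nat t) ` lat v) ` lat v) = t ^ 4"
    using idx_scale[OF v t] unfolding lat_index_cst .
  then have fin: "finite (cst (qscale (of_nat t) ` lat v) ` lat v)"
    using t by (intro card_ge_0_finite) simp
  have "lat_index (lat v) (qscale (of_nat t) ` lat v) = lat_index (lat v) M * lat_index M (qscale (of_nat t) ` lat v)"
    by (rule idx_chain[OF K M agrp_lat tM MsubL fin])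
  then show ?thesis using idx_scale[OF v t] by simp
qed

lemma idx_coprime:
  assumes v: "indep4 v" and t: "t > 0" and M: "agrp M" and tM: "qscale (of_nat t) ` lat v \<subseteq> M" and MsubL: "M \<subseteq> lat v"
    and q: "prime q" "\<not> q dvd t"
  shows "\<not> q dvd lat_index (lat v) M" "lat_index (lat v) M > 0"
proof -
  have e: "lat_index (lat v) M * lat_index M (qscale (of_nat t) ` lat v) = t ^ 4" using idx_dvd[OF v t M tM MsubL] .
  show "\<not> q dvd lat_index (lat v) M"
  proof
    assume "q dvd lat_index (lat v) M"
    then have "q dvd t ^ 4" using e by (metis dvd_mult2)
    then show False using q prime_dvd_power by blast
  qed
  show "lat_index (lat v) M > 0" using e t by (metis gr0I mult_is_0 power_not_zero less_not_refl2)
qed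

lemma anticomm_exists:
  assumes ab: "a < 0" "b < 0"
  shows "\<exists>w. w \<noteq> 0 \<and> qmul a b w u = qmul a b (qconj u) w"
proof (cases "q1 u = 0 \<and> q2 u = 0")
  case True
  show ?thesis
  proof (cases "q3 u = 0")
    case True
    then have "qconj u = u" using \<open>q1 u = 0 \<and> q2 u = 0\<close> by (intro quat_eqI) simp_all
    moreover have "qone \<noteq> 0" by (simp add: qone_def zero_quat_def)
    ultimately show ?thesis by (intro exI[of _ qone]) simp
  next
    case False
    have "qmul a b (Quat 0 1 0 0) u = qmul a b (qconj u) (Quat 0 1 0 0)"
      using True by (intro quat_eqI) simp_all
    then show ?thesis by (intro exI[of _ "Quat 0 1 0 0"]) (simp add: zero_quat_def)
  qed
next
  case False
  define w where "w = Quat 0 (b * q2 u) (- a * q1 u) 0"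
  have "w \<noteq> 0" using False ab unfolding w_def zero_quat_def by auto
  moreover have "qmul a b w u = qmul a b (qconj u) w"
    unfolding w_def by (intro quat_eqI) (simp_all add: algebra_simps)
  ultimately show ?thesis by blast
qed

lemma qconj_conj [simp]: "qconj (qconj u) = u"
  by (rule quat_eqI) simp_all

lemma qconj_zero_iff: "qconj u = 0 \<longleftrightarrow> u = 0"
proof
  assume "qconj u = 0"
  then have "qconj (qconj u) = qconj 0" by simp
  moreover have "qconj 0 = 0" by (rule quat_eqI) simp_all
  ultimately show "u = 0" by simp
qed (auto intro: quat_eqI)

lemma qscale_zero_iff: "r \<noteq> 0 \<Longrightarrow> qscale r x = 0 \<longleftrightarrow> x = 0"
proof
  assume r: "r \<noteq> 0" and "qscale r x = 0"
  then have "qscale (1 / r) (qscale r x) = 0" by simp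
  then show "x = 0" using r by simp
qed simp

lemma rmul_inj:
  assumes ab: "a < 0" "b < 0" and u: "u \<noteq> 0"
  shows "inj (\<lambda>y. qmul a b y u)"
proof (rule injI)
  fix x y assume "qmul a b x u = qmul a b y u"
  then have "qmul a b (qmul a b x u) (qinv a b u) = qmul a b (qmul a b y u) (qinv a b u)" by simp
  then show "x = y" using qinv_right[of a b u] qnrd_zero_iff[OF ab, of u] u by (simp add: qmul_assoc)
qed

context qorder
begin

definition RM :: "quat \<Rightarrow> quat \<Rightarrow> quat" where "RM u = (\<lambda>y. qmul a b y u)"

definition fidx :: "quat \<Rightarrow> nat" where "fidx u = lat_index (lat vo) (RM u ` lat vo)"

lemma RM_add: "RM u (x + y) = RM u x + RM u y"
  unfolding RM_def by (simp add: qmul_add_left)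

lemma RM_lat: "RM u ` lat vo = lat (RM u \<circ> vo)"
  unfolding RM_def by (rule qlinear_lat[OF qlinear_rmul])

lemma RM_indep: "u \<noteq> 0 \<Longrightarrow> indep4 (RM u \<circ> vo)"
  unfolding RM_def
proof (rule qlinear_indep[OF qlinear_rmul _ ind])
  fix x assume u: "u \<noteq> 0" and x: "qmul a b x u = 0"
  then have "qmul a b x u = qmul a b 0 u" by simp
  then show "x = 0" using rmul_inj[OF a_neg b_neg u] unfolding inj_def by blast
qed

lemma RM_agrp: "agrp (RM u ` lat vo)"
  unfolding RM_lat by (rule agrp_lat)

lemma RM_sub: "u \<in> lat vo \<Longrightarrow> RM u ` lat vo \<subseteq> lat vo"
  unfolding RM_def using mul_closed by blast

lemma RM_comp: "RM (qmul a b u w) ` lat vo = RM w ` (RM u ` lat vo)"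
  unfolding RM_def image_image by (simp add: qmul_assoc)

lemma nrd_pos_int:
  assumes u: "u \<in> lat vo" "u \<noteq> 0"
  obtains n :: nat where "n > 0" "qnrd a b u = of_nat n"
proof -
  obtain m where m: "qnrd a b u = of_int m" using nrd_int[OF u(1)] by (elim Ints_cases)
  have "qnrd a b u > 0" using qnrd_pos[OF a_neg b_neg u(2)] .
  then have "m > 0" using m by simp
  then show ?thesis using that[of "nat m"] m by simp
qed

lemma scale_sub_RM:
  assumes u: "u \<in> lat vo" and n: "qnrd a b u = of_nat n"
  shows "qscale (of_nat n) ` lat vo \<subseteq> RM u ` lat vo"
proof
  fix y assume "y \<in> qscale (of_nat n) ` lat vo"
  then obtain oo where oo: "oo \<in> lat vo" "y = qscale (of_nat n) oo" by blast
  have "qmul a b oo (qconj u) \<in> lat vo" using mul_closed[OF oo(1) conj_lat[OF u]] .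
  moreover have "RM u (qmul a b oo (qconj u)) = y"
    unfolding RM_def oo(2) by (simp add: qmul_assoc qmul_conj_left qmul_scale_right n)
  ultimately show "y \<in> RM u ` lat vo" by (metis imageI)
qed

lemma fidx_pos:
  assumes u: "u \<in> lat vo" "u \<noteq> 0"
  shows "fidx u > 0" "finite (cst (RM u ` lat vo) ` lat vo)"
proof -
  obtain n :: nat where n: "n > 0" "qnrd a b u = of_nat n" using nrd_pos_int[OF u] by blast
  have e: "lat_index (lat vo) (RM u ` lat vo) * lat_index (RM u ` lat vo) (qscale (of_nat n) ` lat vo) = n ^ 4"
    by (rule idx_dvd[OF ind n(1) RM_agrp scale_sub_RM[OF u(1) n(2)] RM_sub[OF u(1)]])
  then show "fidx u > 0" unfolding fidx_def using n(1)
    by (cases "lat_index (lat vo) (RM u ` lat vo) = 0") simp_all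
  then show "finite (cst (RM u ` lat vo) ` lat vo)" unfolding fidx_def lat_index_cst by (rule card_ge_0_finite)
qed

lemma fidx_mult:
  assumes u: "u \<in> lat vo" "u \<noteq> 0" and w: "w \<in> lat vo" "w \<noteq> 0"
  shows "fidx (qmul a b u w) = fidx u * fidx w"
proof -
  have "qnrd a b (qmul a b u w) > 0" unfolding qnrd_mult
    using qnrd_pos[OF a_neg b_neg u(2)] qnrd_pos[OF a_neg b_neg w(2)] by simp
  moreover have "qnrd a b 0 = 0" by (simp add: qnrd_def)
  ultimately have "qmul a b u w \<noteq> 0" by (metis less_irrefl)
  then have uw: "qmul a b u w \<in> lat vo" "qmul a b u w \<noteq> 0"
    using mul_closed[OF u(1) w(1)] by auto
  have sub1: "RM w ` (RM u ` lat vo) \<subseteq> RM w ` lat vo" using RM_sub[OF u(1)] by blast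
  have K: "agrp (RM w ` (RM u ` lat vo))" using RM_agrp[of "qmul a b u w"] unfolding RM_comp .
  have fin: "finite (cst (RM w ` (RM u ` lat vo)) ` lat vo)" using fidx_pos(2)[OF uw] unfolding RM_comp .
  have "fidx (qmul a b u w) = lat_index (lat vo) (RM w ` (RM u ` lat vo))" unfolding fidx_def RM_comp ..
  also have "\<dots> = lat_index (lat vo) (RM w ` lat vo) * lat_index (RM w ` lat vo) (RM w ` (RM u ` lat vo))"
    by (rule idx_chain[OF K RM_agrp agrp_lat sub1 RM_sub[OF w(1)] fin])
  also have "lat_index (RM w ` lat vo) (RM w ` (RM u ` lat vo)) = fidx u"
    unfolding fidx_def
  proof (rule idx_iso)
    show "RM w (x + y) = RM w x + RM w y" for x y by (rule RM_add)
    show "inj (RM w)" unfolding RM_def by (rule rmul_inj[OF a_neg b_neg w(2)])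
  qed
  finally show ?thesis unfolding fidx_def by simp
qed

lemma fidx_scalar:
  assumes n: "n > 0"
  shows "fidx (qscale (of_nat n) qone) = n ^ 4"
proof -
  have "RM (qscale (of_nat n) qone) = qscale (of_nat n)" unfolding RM_def
    by (rule ext) (simp add: qmul_scale_right)
  then show ?thesis unfolding fidx_def using idx_scale[OF ind n] by simp
qed

lemma fidx_nrd:
  assumes u: "u \<in> lat vo" "u \<noteq> 0" and n: "qnrd a b u = of_nat n"
  shows "fidx u = n ^ 2"
proof -
  have n0: "n > 0" using qnrd_pos[OF a_neg b_neg u(2)] n by simp
  have cu: "qconj u \<in> lat vo" "qconj u \<noteq> 0" using conj_lat[OF u(1)] u(2) qconj_zero_iff by auto
  obtain w0 where w0: "w0 \<noteq> 0" "qmul a b w0 u = qmul a b (qconj u) w0" using anticomm_exists[OF a_neg b_neg] by blast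
  obtain s :: int where s: "s > 0" "qscale (of_int s) w0 \<in> lat vo" using span_clear[OF ind] by blast
  define w where "w = qscale (of_int s) w0"
  have w: "w \<in> lat vo" "w \<noteq> 0" unfolding w_def using s w0(1) qscale_zero_iff[of "of_int s" w0] by auto
  have wu: "qmul a b w u = qmul a b (qconj u) w"
    unfolding w_def by (simp add: qmul_scale_left qmul_scale_right w0(2))
  have "fidx w * fidx u = fidx (qconj u) * fidx w"
    using fidx_mult[OF w u] fidx_mult[OF cu w] wu by (simp only:)
  then have eq: "fidx u = fidx (qconj u)" using fidx_pos(1)[OF w] by simp
  have "fidx u * fidx (qconj u) = fidx (qmul a b u (qconj u))" using fidx_mult[OF u cu] by simp
  also have "qmul a b u (qconj u) = qscale (of_nat n) qone" by (simp add: qmul_conj_right n)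
  also have "fidx (qscale (of_nat n) qone) = n ^ 4" using fidx_scalar[OF n0] .
  finally have "fidx u * fidx u = n ^ 4" using eq by simp
  moreover have "(n ^ 2) ^ 2 = n ^ 4" by (simp add: power_mult[symmetric])
  ultimately have H: "fidx u ^ 2 = (n ^ 2) ^ 2" by (simp add: power2_eq_square)
  show ?thesis by (rule power_eq_imp_eq_base[OF H]) simp_all
qed

end

context qorder
begin

definition Oq :: "nat \<Rightarrow> quat \<Rightarrow> quat set" where
  "Oq q x = (\<lambda>oo. qmul a b oo x) ` lsp q vo"

definition lid :: "(nat \<Rightarrow> quat) \<Rightarrow> bool" where
  "lid va \<longleftrightarrow> indep4 va \<and> (\<forall>q. prime q \<longrightarrow> (\<exists>x. x \<noteq> 0 \<and> lsp q va = Oq q x))"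

lemma Oq_mem: "h \<in> Oq q x \<longleftrightarrow> (\<exists>oo\<in>lsp q vo. h = qmul a b oo x)"
  unfolding Oq_def by blast

lemma Oq_mul:
  assumes q: "prime q" and oo: "oo \<in> lsp q vo" and h: "h \<in> Oq q x"
  shows "qmul a b oo h \<in> Oq q x"
proof -
  obtain o' where o': "o' \<in> lsp q vo" "h = qmul a b o' x" using h unfolding Oq_mem by blast
  have "qmul a b oo h = qmul a b (qmul a b oo o') x" unfolding o'(2) by (simp add: qmul_assoc)
  moreover have "qmul a b oo o' \<in> lsp q vo" using lsp_mul[OF q oo o'(1)] .
  ultimately show ?thesis unfolding Oq_mem by blast
qed

lemma Oq_gen: "prime q \<Longrightarrow> x \<in> Oq q x"
  unfolding Oq_mem using one_lsp by (metis qmul_one_left)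

lemma Oq_scale_unit:
  assumes q: "prime q" and s: "s \<noteq> 0" "1 / s \<in> zloc q" "s \<in> zloc q"
  shows "Oq q (qscale s x) = Oq q x"
proof
  show "Oq q (qscale s x) \<subseteq> Oq q x"
  proof
    fix h assume "h \<in> Oq q (qscale s x)"
    then obtain oo where oo: "oo \<in> lsp q vo" "h = qmul a b oo (qscale s x)" unfolding Oq_mem by blast
    have "h = qmul a b (qscale s oo) x" unfolding oo(2) by (simp add: qmul_scale_left qmul_scale_right)
    moreover have "qscale s oo \<in> lsp q vo" using lsp_scale[OF q s(3) oo(1)] .
    ultimately show "h \<in> Oq q x" unfolding Oq_mem by blast
  qed
  show "Oq q x \<subseteq> Oq q (qscale s x)"
  proof
    fix h assume "h \<in> Oq q x"
    then obtain oo where oo: "oo \<in> lsp q vo" "h = qmul a b oo x" unfolding Oq_mem by blast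
    have "h = qmul a b (qscale (1 / s) oo) (qscale s x)" unfolding oo(2) using s(1)
      by (simp add: qmul_scale_left qmul_scale_right)
    moreover have "qscale (1 / s) oo \<in> lsp q vo" using lsp_scale[OF q s(2) oo(1)] .
    ultimately show "h \<in> Oq q (qscale s x)" unfolding Oq_mem by blast
  qed
qed

lemma Oq_scale_int:
  assumes q: "prime q" and s: "s > 0" "\<not> int q dvd s"
  shows "Oq q (qscale (of_int s) x) = Oq q x"
  using Oq_scale_unit[OF q] zloc_unit_inv[OF q s(2)] q s(1) by simp

lemma lsp_mono:
  assumes q: "prime q" and sub: "lat v' \<subseteq> lat v"
  shows "lsp q v' \<subseteq> lsp q v"
proof
  fix h assume "h \<in> lsp q v'"
  then obtain c where c: "\<forall>i<4. c i \<in> zloc q" "h = (\<Sum>i<4. qscale (c i) (v' i))" unfolding lsp_mem by blast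
  have "v' i \<in> lsp q v" if "i < 4" for i using sub lat_basis[OF that, of v'] lat_lsp[OF q] by blast
  then show "h \<in> lsp q v" unfolding c(2) using c(1) by (intro lsp_sum[OF q] lsp_scale[OF q]) auto
qed

lemma lid_module:
  assumes L: "lid va" and oo: "oo \<in> lat vo" and h: "h \<in> lat va"
  shows "qmul a b oo h \<in> lat va"
proof (rule local_global)
  show "indep4 va" using L unfolding lid_def by blast
  fix q :: nat assume q: "prime q"
  obtain x where x: "lsp q va = Oq q x" using L q unfolding lid_def by blast
  have "h \<in> Oq q x" using lat_lsp[OF q h] x by simp
  then have "qmul a b oo h \<in> Oq q x" using Oq_mul[OF q lat_lsp[OF q oo]] by blast
  then show "qmul a b oo h \<in> lsp q va" using x by simp
qed

lemma lsp_clear_multi: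
  fixes h :: "nat \<Rightarrow> quat"
  assumes q: "prime q" and h: "\<forall>i<n. h i \<in> lsp q vo"
  shows "\<exists>t::nat. t > 0 \<and> \<not> q dvd t \<and> (\<forall>i<n. qscale (of_nat t) (h i) \<in> lat vo)"
  using h
proof (induct n)
  case 0 then show ?case using q prime_gt_1_nat[OF q] by (intro exI[of _ 1]) simp
next
  case (Suc n)
  then obtain t :: nat where t: "t > 0" "\<not> q dvd t" "\<forall>i<n. qscale (of_nat t) (h i) \<in> lat vo" by auto
  obtain s :: int where s: "s > 0" "\<not> int q dvd s" "qscale (of_int s) (h n) \<in> lat vo"
    using lsp_clear[OF q, of "h n" vo] Suc.prems by auto
  define t' where "t' = t * nat s"
  have t'pos: "t' > 0" unfolding t'_def using t s by simp
  have "\<not> q dvd nat s" using s by (metis int_dvd_int_iff int_nat_eq less_imp_le)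
  then have t'q: "\<not> q dvd t'" unfolding t'_def using t(2) q by (simp add: prime_dvd_mult_iff)
  have "qscale (of_nat t') (h i) \<in> lat vo" if i: "i < Suc n" for i
  proof (cases "i = n")
    case True
    have "qscale (of_nat t') (h i) = qscale (of_int (int t)) (qscale (of_int s) (h n))"
      unfolding t'_def True using s(1) by (simp add: mult.commute)
    then show ?thesis using lat_scale_int[OF s(3), of "int t"] by (simp only:)
  next
    case False
    then have "i < n" using i by simp
    have "qscale (of_nat t') (h i) = qscale (of_int s) (qscale (of_nat t) (h i))"
      unfolding t'_def using s(1) by (simp add: mult.commute)
    then show ?thesis using lat_scale_int[OF t(3)[rule_format, OF \<open>i < n\<close>], of s] by (simp only:)
  qed
  then show ?case using t'pos t'q by blast
qed

lemma RM_sub_lid: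
  assumes L: "lid va" and x: "x \<in> lat va"
  shows "RM x ` lat vo \<subseteq> lat va"
  unfolding RM_def using lid_module[OF L _ x] by blast

lemma coprime_index:
  assumes L: "lid va" and x: "x \<in> lat va" "x \<noteq> 0" and q: "prime q" and gen: "lsp q va = Oq q x"
  obtains t :: nat where "t > 0" "\<not> q dvd t" "qscale (of_nat t) ` lat va \<subseteq> RM x ` lat vo"
proof -
  have ind_a: "indep4 va" using L unfolding lid_def by blast
  have "\<forall>i<4. \<exists>oo. oo \<in> lsp q vo \<and> va i = qmul a b oo x"
  proof (intro allI impI)
    fix i :: nat assume "i < 4"
    then have "va i \<in> Oq q x" using gen lat_lsp[OF q lat_basis] by blast
    then show "\<exists>oo. oo \<in> lsp q vo \<and> va i = qmul a b oo x" unfolding Oq_mem by blast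
  qed
  then obtain oo where oo: "\<forall>i<4. oo i \<in> lsp q vo \<and> va i = qmul a b (oo i) x" by metis
  obtain t :: nat where t: "t > 0" "\<not> q dvd t" "\<forall>i<4. qscale (of_nat t) (oo i) \<in> lat vo"
    using lsp_clear_multi[OF q, of 4 oo] oo by auto
  have sub: "qscale (of_nat t) ` lat va \<subseteq> RM x ` lat vo"
  proof -
    have "qscale (of_nat t) ` lat va = lat (qscale (of_nat t) \<circ> va)" by (rule scale_lat)
    also have "\<dots> \<subseteq> RM x ` lat vo"
    proof
      fix h assume "h \<in> lat (qscale (of_nat t) \<circ> va)"
      then obtain n where n: "h = (\<Sum>i<4. qscale (of_int (n i)) ((qscale (of_nat t) \<circ> va) i))" unfolding lat_mem by blast
      have "h = (\<Sum>i<4. qscale (of_int (n i)) (RM x (qscale (of_nat t) (oo i))))"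
        unfolding n by (rule sum.cong) (auto simp: oo RM_def qmul_scale_left)
      also have "\<dots> = RM x (\<Sum>i<4. qscale (of_int (n i)) (qscale (of_nat t) (oo i)))"
        unfolding RM_def by (simp add: qmul_sum_left qmul_scale_left)
      finally have hh: "h = RM x (\<Sum>i<4. qscale (of_int (n i)) (qscale (of_nat t) (oo i)))" .
      have "(\<Sum>i<4. qscale (of_int (n i)) (qscale (of_nat t) (oo i))) \<in> lat vo"
        using t(3) lat_scale_int by (intro lat_sum) blast
      then show "h \<in> RM x ` lat vo" unfolding hh by (rule imageI)
    qed
    finally show ?thesis .
  qed
  then show ?thesis using that t by blast
qed

end

context qorder
begin

lemma lid_indep: "lid va \<Longrightarrow> indep4 va"
  unfolding lid_def by blast

lemma lid_gen:
  assumes "lid va" "prime q"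
  obtains x where "x \<noteq> 0" "lsp q va = Oq q x"
  using assms unfolding lid_def by blast

lemma vq_nonneg_zloc: "prime q \<Longrightarrow> r \<in> zloc q \<Longrightarrow> r \<noteq> 0 \<Longrightarrow> vq q r \<ge> 0"
  using zloc_iff_vq by blast

lemma norm_lid:
  assumes L: "lid va" and q: "prime q" and gen: "lsp q va = Oq q x" and x: "x \<noteq> 0"
  shows "vq q (lat_norm a b (lat va)) = vq q (qnrd a b x)"
proof -
  have ind: "indep4 va" using lid_indep[OF L] .
  define N where "N = lat_norm a b (lat va)"
  have N: "N > 0" using lat_norm_char[OF a_neg b_neg ind] unfolding N_def by simp
  have nx: "qnrd a b x > 0" using qnrd_pos[OF a_neg b_neg x] .
  have "x \<in> lsp q va" using Oq_gen[OF q] gen by simp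
  then have "qnrd a b x / N \<in> zloc q" using norm_loc_upper[OF a_neg b_neg ind q] unfolding N_def by blast
  then have "vq q (qnrd a b x / N) \<ge> 0" using vq_nonneg_zloc[OF q] nx N by simp
  then have ge: "vq q (qnrd a b x) \<ge> vq q N" using nx N q by (simp add: vq_divide)
  obtain w where w: "w \<in> lat va" "qnrd a b w \<noteq> 0" "N / qnrd a b w \<in> zloc q"
    using norm_loc_lower[OF a_neg b_neg ind q] unfolding N_def by blast
  have "w \<in> Oq q x" using lat_lsp[OF q w(1)] gen by simp
  then obtain oo where oo: "oo \<in> lsp q vo" "w = qmul a b oo x" unfolding Oq_mem by blast
  have nw: "qnrd a b w = qnrd a b oo * qnrd a b x" unfolding oo(2) by (rule qnrd_mult)
  have no: "qnrd a b oo \<noteq> 0" using w(2) nw by simp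
  have "vq q (qnrd a b oo) \<ge> 0" using vq_nonneg_zloc[OF q nrd_integral[OF q oo(1)] no] .
  moreover have "vq q (N / qnrd a b w) \<ge> 0" using vq_nonneg_zloc[OF q w(3)] N w(2) by simp
  ultimately have "vq q N \<ge> vq q (qnrd a b x)" using q N w(2) no nx unfolding nw
    by (simp add: vq_divide vq_mult)
  then show ?thesis using ge unfolding N_def by simp
qed

lemma vq_nat_coprime: "prime q \<Longrightarrow> \<not> q dvd n \<Longrightarrow> vq q (of_nat n) = 0"
  using vq_unit_int[of q "int n"] by (simp add: int_dvd_int_iff)

lemma main_q:
  assumes A: "lid va" and B: "lid vb" and BA: "lat vb \<subseteq> lat va" and q: "prime q"
  shows "lat_index (lat va) (lat vb) > 0 \<and>
    vq q (of_nat (lat_index (lat va) (lat vb))) = vq q ((lat_norm a b (lat vb) / lat_norm a b (lat va)) ^ 2)"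
proof -
  have inda: "indep4 va" and indb: "indep4 vb" using lid_indep A B by auto
  obtain xq where xq: "xq \<noteq> 0" "lsp q va = Oq q xq" using lid_gen[OF A q] by blast
  obtain s :: int where s: "s > 0" "\<not> int q dvd s" "qscale (of_int s) xq \<in> lat va"
    using lsp_clear[OF q, of xq va] Oq_gen[OF q, of xq] xq(2) by auto
  define x where "x = qscale (of_int s) xq"
  have x: "x \<in> lat va" "x \<noteq> 0" "lsp q va = Oq q x"
    unfolding x_def using s xq qscale_zero_iff[of "of_int s" xq] Oq_scale_int[OF q s(1,2)] by auto
  obtain yq where yq: "yq \<noteq> 0" "lsp q vb = Oq q yq" using lid_gen[OF B q] by blast
  obtain s2 :: int where s2: "s2 > 0" "\<not> int q dvd s2" "qscale (of_int s2) yq \<in> lat vb"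
    using lsp_clear[OF q, of yq vb] Oq_gen[OF q, of yq] yq(2) by auto
  define y where "y = qscale (of_int s2) yq"
  have y: "y \<in> lat vb" "y \<noteq> 0" "lsp q vb = Oq q y"
    unfolding y_def using s2 yq qscale_zero_iff[of "of_int s2" yq] Oq_scale_int[OF q s2(1,2)] by auto
  have "y \<in> lsp q va" using lsp_mono[OF q BA] lat_lsp[OF q y(1)] by blast
  then have "y \<in> Oq q x" using x(3) by simp
  then obtain z where z: "z \<in> lsp q vo" "y = qmul a b z x" unfolding Oq_mem by blast
  have z0: "z \<noteq> 0" using y(2) z(2) by auto
  obtain s3 :: int where s3: "s3 > 0" "\<not> int q dvd s3" "qscale (of_int s3) z \<in> lat vo"
    using lsp_clear[OF q z(1)] by blast
  define u where "u = qscale (of_int s3) z"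
  have u: "u \<in> lat vo" "u \<noteq> 0" unfolding u_def using s3 z0 qscale_zero_iff[of "of_int s3" z] by auto
  have ux: "qmul a b u x = qscale (of_int s3) y" unfolding u_def z(2) by (simp add: qmul_scale_left)
  obtain nu :: nat where nu: "nu > 0" "qnrd a b u = of_nat nu" using nrd_pos_int[OF u] by blast
  have fu: "fidx u = nu ^ 2" using fidx_nrd[OF u nu(2)] .
  define K where "K = RM (qmul a b u x) ` lat vo"
  have K_comp: "K = RM x ` (RM u ` lat vo)" unfolding K_def by (rule RM_comp)
  have Kag: "agrp K" unfolding K_def by (rule RM_agrp)
  have Oxag: "agrp (RM x ` lat vo)" by (rule RM_agrp)
  have KOx: "K \<subseteq> RM x ` lat vo" unfolding K_comp using RM_sub[OF u(1)] by blast
  have OxA: "RM x ` lat vo \<subseteq> lat va" using RM_sub_lid[OF A x(1)] .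
  have s3y: "qscale (of_int s3) y \<in> lat vb" "qscale (of_int s3) y \<noteq> 0"
    using lat_scale_int[OF y(1)] y(2) s3(1) qscale_zero_iff[of "of_int s3" y] by auto
  have KB: "K \<subseteq> lat vb" unfolding K_def ux using RM_sub_lid[OF B s3y(1)] .
  obtain t1 :: nat where t1: "t1 > 0" "\<not> q dvd t1" "qscale (of_nat t1) ` lat va \<subseteq> RM x ` lat vo"
    using coprime_index[OF A x(1,2) q x(3)] by blast
  have gen_s3y: "lsp q vb = Oq q (qscale (of_int s3) y)" using y(3) Oq_scale_int[OF q s3(1,2)] by simp
  obtain t2 :: nat where t2: "t2 > 0" "\<not> q dvd t2" "qscale (of_nat t2) ` lat vb \<subseteq> K"
    using coprime_index[OF B s3y q gen_s3y] unfolding K_def ux by blast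
  have TK: "qscale (of_nat (t1 * nu)) ` lat va \<subseteq> K"
  proof
    fix h assume "h \<in> qscale (of_nat (t1 * nu)) ` lat va"
    then obtain h0 where h0: "h0 \<in> lat va" "h = qscale (of_nat (t1 * nu)) h0" by blast
    have "qscale (of_nat t1) h0 \<in> RM x ` lat vo" using t1(3) h0(1) by blast
    then obtain o1 where o1: "o1 \<in> lat vo" "qscale (of_nat t1) h0 = RM x o1" by blast
    have "qscale (of_nat nu) o1 \<in> RM u ` lat vo" using scale_sub_RM[OF u(1) nu(2)] o1(1) by blast
    then obtain o2 where o2: "o2 \<in> lat vo" "qscale (of_nat nu) o1 = RM u o2" by blast
    have "h = qscale (of_nat nu) (qscale (of_nat t1) h0)" unfolding h0(2) by (simp add: mult.commute)
    also have "\<dots> = RM x (qscale (of_nat nu) o1)" unfolding o1(2) RM_def by (simp add: qmul_scale_left)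
    also have "\<dots> = RM x (RM u o2)" unfolding o2(2) ..
    finally show "h \<in> K" unfolding K_comp using o2(1) by blast
  qed
  have T0: "t1 * nu > 0" using t1(1) nu(1) by simp
  have KA: "K \<subseteq> lat va" using KB BA by blast
  have eT: "lat_index (lat va) K * lat_index K (qscale (of_nat (t1 * nu)) ` lat va) = (t1 * nu) ^ 4"
    by (rule idx_dvd[OF inda T0 Kag TK KA])
  have AK0: "lat_index (lat va) K > 0" using eT T0 by (cases "lat_index (lat va) K = 0") simp_all
  have finK: "finite (cst K ` lat va)" using AK0 unfolding lat_index_cst by (rule card_ge_0_finite)
  have E1: "lat_index (lat va) K = lat_index (lat va) (RM x ` lat vo) * lat_index (RM x ` lat vo) K"
    by (rule idx_chain[OF Kag Oxag agrp_lat KOx OxA finK])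
  have "lat_index (RM x ` lat vo) K = fidx u"
    unfolding K_comp fidx_def
  proof (rule idx_iso)
    show "RM x (y1 + y2) = RM x y1 + RM x y2" for y1 y2 by (rule RM_add)
    show "inj (RM x)" unfolding RM_def by (rule rmul_inj[OF a_neg b_neg x(2)])
  qed
  then have E1': "lat_index (lat va) K = lat_index (lat va) (RM x ` lat vo) * nu ^ 2" using E1 fu by simp
  have E2: "lat_index (lat va) K = lat_index (lat va) (lat vb) * lat_index (lat vb) K"
    by (rule idx_chain[OF Kag agrp_lat agrp_lat KB BA finK])
  have C1: "\<not> q dvd lat_index (lat va) (RM x ` lat vo)"
    using idx_coprime(1)[OF inda t1(1) Oxag t1(3) OxA q t1(2)] .
  have C2: "\<not> q dvd lat_index (lat vb) K"
    using idx_coprime(1)[OF indb t2(1) Kag t2(3) KB q t2(2)] .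
  have AB0: "lat_index (lat va) (lat vb) > 0" using AK0 E2 by (cases "lat_index (lat va) (lat vb) = 0") simp_all
  have BK0: "lat_index (lat vb) K > 0" using AK0 E2 by (cases "lat_index (lat vb) K = 0") simp_all
  define iAB where "iAB = lat_index (lat va) (lat vb)"
  define iBK where "iBK = lat_index (lat vb) K"
  define iAO where "iAO = lat_index (lat va) (RM x ` lat vo)"
  have prod: "iAB * iBK = iAO * nu ^ 2" using E1' E2 unfolding iAB_def iBK_def iAO_def by simp
  have AO0: "iAO > 0" using prod AB0 BK0 unfolding iAB_def iBK_def by (cases "iAO = 0") simp_all
  have "vq q (of_nat (iAB * iBK)) = vq q (of_nat (iAO * nu ^ 2))" using prod by simp
  then have "vq q (of_nat iAB) + vq q (of_nat iBK) = vq q (of_nat iAO) + vq q (of_nat (nu ^ 2))"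
    using AB0 BK0 AO0 nu(1) q unfolding iAB_def[symmetric] iBK_def[symmetric]
    by (simp add: vq_mult del: of_nat_power)
  moreover have "vq q (of_nat iBK) = 0" using vq_nat_coprime[OF q C2] unfolding iBK_def .
  moreover have "vq q (of_nat iAO) = 0" using vq_nat_coprime[OF q C1] unfolding iAO_def .
  ultimately have vAB: "vq q (of_nat iAB) = 2 * vq q (qnrd a b u)" using nu(2) q by (simp add: vq_power)
  have "qnrd a b u = of_int s3 ^ 2 * qnrd a b z" unfolding u_def by (rule qnrd_scale)
  moreover have "vq q (of_int s3) = 0" using vq_unit_int[OF q s3(2)] .
  moreover have "qnrd a b z \<noteq> 0" using qnrd_pos[OF a_neg b_neg z0] by simp
  ultimately have vu: "vq q (qnrd a b u) = vq q (qnrd a b z)" using q s3(1) by (simp add: vq_mult vq_power)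
  have nA: "vq q (lat_norm a b (lat va)) = vq q (qnrd a b x)" using norm_lid[OF A q x(3) x(2)] .
  have nB: "vq q (lat_norm a b (lat vb)) = vq q (qnrd a b y)" using norm_lid[OF B q y(3) y(2)] .
  have ny: "qnrd a b y = qnrd a b z * qnrd a b x" unfolding z(2) by (rule qnrd_mult)
  have NA: "lat_norm a b (lat va) > 0" using lat_norm_char[OF a_neg b_neg inda] by simp
  have NB: "lat_norm a b (lat vb) > 0" using lat_norm_char[OF a_neg b_neg indb] by simp
  have nz: "qnrd a b z \<noteq> 0" "qnrd a b x \<noteq> 0" using qnrd_pos[OF a_neg b_neg z0] qnrd_pos[OF a_neg b_neg x(2)] by simp_all
  have "vq q ((lat_norm a b (lat vb) / lat_norm a b (lat va)) ^ 2) =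
      2 * (vq q (lat_norm a b (lat vb)) - vq q (lat_norm a b (lat va)))"
    using NA NB q by (simp add: vq_power vq_divide)
  also have "\<dots> = 2 * vq q (qnrd a b z)" unfolding nA nB ny using nz q by (simp add: vq_mult)
  finally show ?thesis using vAB vu AB0 unfolding iAB_def by simp
qed

lemma main_index:
  assumes A: "lid va" and B: "lid vb" and BA: "lat vb \<subseteq> lat va"
  shows "of_nat (lat_index (lat va) (lat vb)) = (lat_norm a b (lat vb) / lat_norm a b (lat va)) ^ 2"
proof (rule vq_eq_all)
  show "of_nat (lat_index (lat va) (lat vb)) > (0::rat)" using main_q[OF A B BA two_is_prime_nat] by simp
  have "lat_norm a b (lat vb) > 0" "lat_norm a b (lat va) > 0"
    using lat_norm_char[OF a_neg b_neg] lid_indep A B by auto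
  then show "(lat_norm a b (lat vb) / lat_norm a b (lat va)) ^ 2 > 0" by simp
  show "vq q (of_nat (lat_index (lat va) (lat vb))) = vq q ((lat_norm a b (lat vb) / lat_norm a b (lat va)) ^ 2)"
    if "prime q" for q using main_q[OF A B BA that] by simp
qed

end

context qorder
begin

lemma conj_inv_mul:
  assumes nz: "qnrd a b z \<noteq> 0"
  shows "qmul a b (qscale (of_nat m / qnrd a b z) (qconj z)) (qmul a b z x) = qscale (of_nat m) x"
proof -
  have "qmul a b (qscale (of_nat m / qnrd a b z) (qconj z)) (qmul a b z x)
      = qscale (of_nat m / qnrd a b z) (qmul a b (qmul a b (qconj z) z) x)"
    by (simp add: qmul_scale_left qmul_assoc)
  also have "\<dots> = qscale (of_nat m / qnrd a b z * qnrd a b z) x"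
    by (simp add: qmul_conj_left qmul_scale_left)
  also have "of_nat m / qnrd a b z * qnrd a b z = of_nat m" using nz by simp
  finally show ?thesis .
qed

lemma ratio_zloc:
  assumes q: "prime q" and nz: "qnrd a b z \<noteq> 0" and m: "m > 0" and v: "vq q (qnrd a b z) = vq q (of_nat m)"
  shows "of_nat m / qnrd a b z \<in> zloc q"
proof -
  have "vq q (of_nat m / qnrd a b z) = 0" using q nz m v by (simp add: vq_divide)
  then show ?thesis using zloc_iff_vq[OF q] by simp
qed

lemma unit_elt_lsp:
  assumes q: "prime q" and z: "z \<in> lsp q vo" and r: "r \<in> zloc q"
  shows "qscale r (qconj z) \<in> lsp q vo"
  using lsp_scale[OF q r conj_lsp[OF q z]] .

lemma scale_sub:
  assumes A: "lid va" and B: "lid vb" and BA: "lat vb \<subseteq> lat va" and m: "m > 0"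
    and N: "lat_norm a b (lat vb) = of_nat m * lat_norm a b (lat va)"
  shows "qscale (of_nat m) ` lat va \<subseteq> lat vb"
proof
  fix h' assume "h' \<in> qscale (of_nat m) ` lat va"
  then obtain h where h: "h \<in> lat va" "h' = qscale (of_nat m) h" by blast
  show "h' \<in> lat vb"
  proof (rule local_global[OF lid_indep[OF B]])
    fix q :: nat assume q: "prime q"
    obtain x where x: "x \<noteq> 0" "lsp q va = Oq q x" using lid_gen[OF A q] by blast
    obtain y where y: "y \<noteq> 0" "lsp q vb = Oq q y" using lid_gen[OF B q] by blast
    have "y \<in> lsp q va" using lsp_mono[OF q BA] Oq_gen[OF q, of y] y(2) by blast
    then obtain z where z: "z \<in> lsp q vo" "y = qmul a b z x" unfolding x(2) Oq_mem by blast
    have z0: "z \<noteq> 0" using y(1) z(2) by auto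
    have nz: "qnrd a b z \<noteq> 0" "qnrd a b x \<noteq> 0" using qnrd_pos[OF a_neg b_neg z0] qnrd_pos[OF a_neg b_neg x(1)] by simp_all
    have NA: "lat_norm a b (lat va) > 0" using lat_norm_char[OF a_neg b_neg lid_indep[OF A]] by simp
    have "vq q (lat_norm a b (lat vb)) = vq q (of_nat m) + vq q (lat_norm a b (lat va))"
      unfolding N using q m NA by (simp add: vq_mult)
    then have "vq q (qnrd a b z) + vq q (qnrd a b x) = vq q (of_nat m) + vq q (qnrd a b x)"
      unfolding norm_lid[OF B q y(2) y(1)] norm_lid[OF A q x(2) x(1)] z(2) qnrd_mult
      using q nz by (simp add: vq_mult)
    then have vz: "vq q (qnrd a b z) = vq q (of_nat m)" by simp
    define w where "w = qscale (of_nat m / qnrd a b z) (qconj z)"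
    have w: "w \<in> lsp q vo" unfolding w_def by (rule unit_elt_lsp[OF q z(1) ratio_zloc[OF q nz(1) m vz]])
    have wy: "qmul a b w y = qscale (of_nat m) x" unfolding w_def z(2) by (rule conj_inv_mul[OF nz(1)])
    have "h \<in> Oq q x" using lat_lsp[OF q h(1)] x(2) by simp
    then obtain oo where oo: "oo \<in> lsp q vo" "h = qmul a b oo x" unfolding Oq_mem by blast
    have "h' = qmul a b oo (qscale (of_nat m) x)" unfolding h(2) oo(2) by (simp add: qmul_scale_right)
    also have "\<dots> = qmul a b (qmul a b oo w) y" unfolding wy[symmetric] by (simp add: qmul_assoc)
    finally have "h' \<in> Oq q y" unfolding Oq_mem using lsp_mul[OF q oo(1) w] by blast
    then show "h' \<in> lsp q vb" using y(2) by simp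
  qed
qed

lemma sub_back:
  assumes A: "lid va" and B: "lid vb" and mAB: "qscale (of_nat m) ` lat va \<subseteq> lat vb" and m: "m > 0"
    and N: "lat_norm a b (lat vb) = of_nat m * lat_norm a b (lat va)"
  shows "lat vb \<subseteq> lat va"
proof
  fix h assume h: "h \<in> lat vb"
  show "h \<in> lat va"
  proof (rule local_global[OF lid_indep[OF A]])
    fix q :: nat assume q: "prime q"
    obtain x where x: "x \<noteq> 0" "lsp q va = Oq q x" using lid_gen[OF A q] by blast
    obtain y where y: "y \<noteq> 0" "lsp q vb = Oq q y" using lid_gen[OF B q] by blast
    have "qscale (of_nat m) ` lsp q va = lsp q (qscale (of_nat m) \<circ> va)" by (rule qlinear_lsp[OF qlinear_scale])
    also have "\<dots> \<subseteq> lsp q vb" using lsp_mono[OF q] mAB scale_lat[of "of_nat m" va] by simp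
    finally have "qscale (of_nat m) x \<in> lsp q vb" using Oq_gen[OF q, of x] x(2) by blast
    then obtain z where z: "z \<in> lsp q vo" "qscale (of_nat m) x = qmul a b z y" unfolding y(2) Oq_mem by blast
    have z0: "z \<noteq> 0" using x(1) z(2) m qscale_zero_iff[of "of_nat m" x] by auto
    have nz: "qnrd a b z \<noteq> 0" "qnrd a b x \<noteq> 0" "qnrd a b y \<noteq> 0"
      using qnrd_pos[OF a_neg b_neg z0] qnrd_pos[OF a_neg b_neg x(1)] qnrd_pos[OF a_neg b_neg y(1)] by simp_all
    have NA: "lat_norm a b (lat va) > 0" using lat_norm_char[OF a_neg b_neg lid_indep[OF A]] by simp
    have vB: "vq q (qnrd a b y) = vq q (of_nat m) + vq q (qnrd a b x)"
      using norm_lid[OF B q y(2) y(1)] norm_lid[OF A q x(2) x(1)] N q m NA by (simp add: vq_mult)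
    have "qnrd a b (qscale (of_nat m) x) = qnrd a b z * qnrd a b y" unfolding z(2) by (rule qnrd_mult)
    then have "of_nat m ^ 2 * qnrd a b x = qnrd a b z * qnrd a b y" by (simp add: qnrd_scale)
    then have "vq q (of_nat m ^ 2 * qnrd a b x) = vq q (qnrd a b z * qnrd a b y)" by simp
    then have "2 * vq q (of_nat m) + vq q (qnrd a b x) = vq q (qnrd a b z) + vq q (qnrd a b y)"
      using q m nz by (simp add: vq_mult vq_power)
    then have vz: "vq q (qnrd a b z) = vq q (of_nat m)" using vB by simp
    define w where "w = qscale (of_nat m / qnrd a b z) (qconj z)"
    have w: "w \<in> lsp q vo" unfolding w_def by (rule unit_elt_lsp[OF q z(1) ratio_zloc[OF q nz(1) m vz]])
    have "qscale (of_nat m) (qmul a b w x) = qmul a b w (qscale (of_nat m) x)" by (simp add: qmul_scale_right)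
    also have "\<dots> = qscale (of_nat m) y" unfolding z(2) w_def by (rule conj_inv_mul[OF nz(1)])
    finally have wx: "qmul a b w x = y" using m qscale_zero_iff[of "of_nat m" "qmul a b w x - y"]
      by (simp add: qscale_diff_right)
    have "h \<in> Oq q y" using lat_lsp[OF q h] y(2) by simp
    then obtain oo where oo: "oo \<in> lsp q vo" "h = qmul a b oo y" unfolding Oq_mem by blast
    have "h = qmul a b (qmul a b oo w) x" unfolding oo(2) wx[symmetric] by (simp add: qmul_assoc)
    then have "h \<in> Oq q x" unfolding Oq_mem using lsp_mul[OF q oo(1) w] by blast
    then show "h \<in> lsp q va" using x(2) by simp
  qed
qed

lemma lid_scale:
  assumes A: "lid va" and m: "m > 0"
  shows "lid (qscale (of_nat m) \<circ> va)"
  unfolding lid_def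
proof (intro conjI allI impI)
  show "indep4 (qscale (of_nat m) \<circ> va)"
    by (rule qlinear_indep[OF qlinear_scale _ lid_indep[OF A]]) (use m qscale_zero_iff in auto)
  fix q :: nat assume q: "prime q"
  obtain x where x: "x \<noteq> 0" "lsp q va = Oq q x" using lid_gen[OF A q] by blast
  have "lsp q (qscale (of_nat m) \<circ> va) = qscale (of_nat m) ` lsp q va"
    by (rule qlinear_lsp[OF qlinear_scale, symmetric])
  also have "\<dots> = Oq q (qscale (of_nat m) x)"
    unfolding x(2) Oq_def image_image by (simp add: qmul_scale_right)
  finally have e: "lsp q (qscale (of_nat m) \<circ> va) = Oq q (qscale (of_nat m) x)" .
  have "qscale (of_nat m) x \<noteq> 0" using x(1) m qscale_zero_iff[of "of_nat m" x] by simp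
  then show "\<exists>x. x \<noteq> 0 \<and> lsp q (qscale (of_nat m) \<circ> va) = Oq q x"
    using e by blast
qed

lemma norm_scale:
  assumes A: "lid va" and m: "m > 0"
  shows "lat_norm a b (lat (qscale (of_nat m) \<circ> va)) = of_nat m ^ 2 * lat_norm a b (lat va)"
proof (rule lat_norm_eqI[OF a_neg b_neg lid_indep[OF lid_scale[OF A m]]])
  have c: "lat_norm a b (lat va) > 0" "int_span (qnrd a b ` lat va) = {of_int n * lat_norm a b (lat va) | n. True}"
    using lat_norm_char[OF a_neg b_neg lid_indep[OF A]] by auto
  show "of_nat m ^ 2 * lat_norm a b (lat va) > 0" using c(1) m by simp
  have "qnrd a b ` lat (qscale (of_nat m) \<circ> va) = (\<lambda>r. of_nat m ^ 2 * r) ` (qnrd a b ` lat va)"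
    unfolding scale_lat[symmetric] image_image by (simp add: qnrd_scale)
  then have "int_span (qnrd a b ` lat (qscale (of_nat m) \<circ> va)) = (\<lambda>r. of_nat m ^ 2 * r) ` int_span (qnrd a b ` lat va)"
    using int_span_scale by simp
  also have "\<dots> = {of_int n * (of_nat m ^ 2 * lat_norm a b (lat va)) | n. True}"
    unfolding c(2) by (auto simp: image_iff mult_ac)
  finally show "int_span (qnrd a b ` lat (qscale (of_nat m) \<circ> va)) =
      {of_int n * (of_nat m ^ 2 * lat_norm a b (lat va)) | n. True}" .
qed

end

lemma qunit_iff:
  assumes ab: "a < 0" "b < 0"
  shows "qunit a b x \<longleftrightarrow> x \<noteq> 0"
proof
  assume "qunit a b x"
  then obtain y where "qmul a b x y = qone" unfolding qunit_def by blast
  moreover have "qone \<noteq> 0" by (simp add: qone_def zero_quat_def)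
  ultimately show "x \<noteq> 0" by auto
next
  assume x: "x \<noteq> 0"
  have "qnrd a b x \<noteq> 0" using qnrd_pos[OF ab x] by simp
  then show "qunit a b x" unfolding qunit_def using qinv_left qinv_right by blast
qed

context qorder
begin

lemma left_ideal_lid:
  assumes "left_ideal a b (lat vo) L"
  obtains va where "L = lat va" "lid va"
proof -
  obtain va where va: "indep4 va" "L = lat va" using assms unfolding left_ideal_def is_lattice_iff by blast
  have "lid va" unfolding lid_def
  proof (intro conjI allI impI)
    show "indep4 va" by (rule va(1))
    fix q :: nat assume q: "prime q"
    obtain x where x: "qunit a b x" "loc_span q L = {qmul a b y x | y. y \<in> loc_span q (lat vo)}"
      using assms q unfolding left_ideal_def by blast
    have "lsp q va = Oq q x"
      using x(2) unfolding va(2) loc_span_lat[OF q va(1)] loc_span_lat[OF q ind] Oq_def by blast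
    then show "\<exists>x. x \<noteq> 0 \<and> lsp q va = Oq q x" using x(1) qunit_iff[OF a_neg b_neg] by blast
  qed
  then show ?thesis using that va(2) by blast
qed

lemma lid_left_ideal:
  assumes "lid va"
  shows "left_ideal a b (lat vo) (lat va)"
  unfolding left_ideal_def
proof (intro conjI allI impI)
  show "is_lattice (lat va)" unfolding is_lattice_iff using lid_indep[OF assms] by blast
  fix q :: nat assume q: "prime q"
  obtain x where x: "x \<noteq> 0" "lsp q va = Oq q x" using lid_gen[OF assms q] by blast
  have "loc_span q (lat va) = {qmul a b y x | y. y \<in> loc_span q (lat vo)}"
    unfolding loc_span_lat[OF q lid_indep[OF assms]] loc_span_lat[OF q ind] x(2) Oq_def by blast
  then show "\<exists>x. qunit a b x \<and> loc_span q (lat va) = {qmul a b y x | y. y \<in> loc_span q (lat vo)}"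
    using x(1) qunit_iff[OF a_neg b_neg] by blast
qed

lemma Tm_char:
  assumes A: "lid va" and B: "lid vb" and BA: "lat vb \<subseteq> lat va"
  shows "lat_norm a b (lat vb) = of_nat m * lat_norm a b (lat va) \<longleftrightarrow> lat_index (lat va) (lat vb) = m ^ 2"
proof -
  have NA: "lat_norm a b (lat va) > 0" and NB: "lat_norm a b (lat vb) > 0"
    using lat_norm_char[OF a_neg b_neg] lid_indep A B by auto
  have mi: "of_nat (lat_index (lat va) (lat vb)) = (lat_norm a b (lat vb) / lat_norm a b (lat va)) ^ 2"
    by (rule main_index[OF A B BA])
  show ?thesis
  proof
    assume "lat_norm a b (lat vb) = of_nat m * lat_norm a b (lat va)"
    then have "lat_norm a b (lat vb) / lat_norm a b (lat va) = of_nat m" using NA by simp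
    then have "(of_nat (lat_index (lat va) (lat vb)) :: rat) = of_nat (m ^ 2)" using mi by simp
    then show "lat_index (lat va) (lat vb) = m ^ 2" by (simp only: of_nat_eq_iff)
  next
    assume "lat_index (lat va) (lat vb) = m ^ 2"
    then have H: "(lat_norm a b (lat vb) / lat_norm a b (lat va)) ^ 2 = (of_nat m) ^ 2" using mi by simp
    have "lat_norm a b (lat vb) / lat_norm a b (lat va) = of_nat m"
      by (rule power_eq_imp_eq_base[OF H]) (use NA NB in simp_all)
    then show "lat_norm a b (lat vb) = of_nat m * lat_norm a b (lat va)" using NA by (simp add: field_simps)
  qed
qed

end

theorem lemma1:
  fixes a b :: rat and O' A :: "quat set" and m :: nat
  assumes "definite_quat_alg a b"
    and "is_order a b O'"
    and "left_ideal a b O' A"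
    and "m \<ge> 1"
  shows "Tm a b O' m A = {B. left_ideal a b O' B \<and> B \<subseteq> A \<and> lat_index A B = m ^ 2}
    \<and> (\<forall>B\<in>Tm a b O' m A. lat_smult m A \<subseteq> B)
    \<and> (\<forall>B. left_ideal a b O' B \<longrightarrow> (B \<in> Tm a b O' m A \<longleftrightarrow> lat_smult m A \<in> Tm a b O' m B))"
proof -
  have ab: "a < 0" "b < 0" using assms(1) unfolding definite_quat_alg_def by auto
  obtain vo where vo: "indep4 vo" "O' = lat vo" using assms(2) unfolding is_order_def is_lattice_iff by blast
  have one: "qone \<in> lat vo" and mc: "\<And>x y. x \<in> lat vo \<Longrightarrow> y \<in> lat vo \<Longrightarrow> qmul a b x y \<in> lat vo"
    using assms(2) unfolding is_order_def vo(2) by auto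
  interpret qorder a b vo by (rule qorder.intro[OF ab vo(1) one mc])
  have m: "m > 0" using assms(4) by simp
  obtain va where va: "A = lat va" "lid va" using left_ideal_lid assms(3) unfolding vo(2) by blast
  have smult: "lat_smult m A = lat (qscale (of_nat m) \<circ> va)"
    unfolding lat_smult_def va(1) by (rule scale_lat)
  have P1: "Tm a b O' m A = {B. left_ideal a b O' B \<and> B \<subseteq> A \<and> lat_index A B = m ^ 2}"
  proof (rule set_eqI)
    fix B
    show "B \<in> Tm a b O' m A \<longleftrightarrow> B \<in> {B. left_ideal a b O' B \<and> B \<subseteq> A \<and> lat_index A B = m ^ 2}"
    proof (cases "left_ideal a b O' B \<and> B \<subseteq> A")
      case True
      then obtain vb where vb: "B = lat vb" "lid vb" using left_ideal_lid unfolding vo(2) by blast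
      have "lat vb \<subseteq> lat va" using True vb(1) va(1) by simp
      then show ?thesis using Tm_char[OF va(2) vb(2), of m] True unfolding Tm_def va(1) vb(1) by simp
    next
      case False
      then show ?thesis unfolding Tm_def by auto
    qed
  qed
  have P2: "lat_smult m A \<subseteq> B" if B: "B \<in> Tm a b O' m A" for B
  proof -
    have B': "left_ideal a b O' B" "B \<subseteq> A" "lat_norm a b B = of_nat m * lat_norm a b A"
      using B unfolding Tm_def by auto
    obtain vb where vb: "B = lat vb" "lid vb" using left_ideal_lid B'(1) unfolding vo(2) by blast
    show ?thesis unfolding lat_smult_def va(1) vb(1)
      by (rule scale_sub[OF va(2) vb(2) _ m]) (use B'(2,3) va(1) vb(1) in simp_all)
  qed
  have P3: "B \<in> Tm a b O' m A \<longleftrightarrow> lat_smult m A \<in> Tm a b O' m B" if B: "left_ideal a b O' B" for B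
  proof -
    obtain vb where vb: "B = lat vb" "lid vb" using left_ideal_lid B unfolding vo(2) by blast
    have lidm: "lid (qscale (of_nat m) \<circ> va)" by (rule lid_scale[OF va(2) m])
    have lim: "left_ideal a b O' (lat_smult m A)" unfolding smult vo(2) by (rule lid_left_ideal[OF lidm])
    have nm: "lat_norm a b (lat_smult m A) = of_nat m ^ 2 * lat_norm a b A"
      unfolding smult unfolding va(1) by (rule norm_scale[OF va(2) m])
    show ?thesis
    proof
      assume BT: "B \<in> Tm a b O' m A"
      have "lat_smult m A \<subseteq> B" using P2[OF BT] .
      moreover have "lat_norm a b B = of_nat m * lat_norm a b A" using BT unfolding Tm_def by auto
      then have "lat_norm a b (lat_smult m A) = of_nat m * lat_norm a b B" unfolding nm by (simp add: power2_eq_square)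
      ultimately show "lat_smult m A \<in> Tm a b O' m B" unfolding Tm_def using lim by simp
    next
      assume MT: "lat_smult m A \<in> Tm a b O' m B"
      have sub: "lat_smult m A \<subseteq> B" and nB: "lat_norm a b (lat_smult m A) = of_nat m * lat_norm a b B"
        using MT unfolding Tm_def by auto
      have "of_nat m * (of_nat m * lat_norm a b A) = of_nat m * lat_norm a b B" using nB unfolding nm by (simp add: power2_eq_square)
      then have NB: "lat_norm a b B = of_nat m * lat_norm a b A" using m by simp
      have "qscale (of_nat m) ` lat va \<subseteq> lat vb" using sub unfolding lat_smult_def va(1) vb(1) .
      then have "lat vb \<subseteq> lat va" by (rule sub_back[OF va(2) vb(2) _ m]) (use NB va(1) vb(1) in simp)
      then show "B \<in> Tm a b O' m A" unfolding Tm_def using B NB va(1) vb(1) by simp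
    qed
  qed
  show ?thesis using P1 P2 P3 by blast
qed

end
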